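(* Let $(S,V)$ be a complete semiring-semimodule pair, let $S'\subseteq S$ contain $0$ and $1$, and let $\mathcal P=(n,\Gamma,I,M,P,p_0,l)$ be an $S'$-$\omega$-pushdown automaton over $(S,V)$. Then $\big(\|\mathcal P\|,\ (((M^* )_{p,\epsilon})_{p\in\Gamma},((M^{\omega,l})_p)_{p\in\Gamma})\big)$ is a solution of the $S'^{n\times n}$-algebraic system $$y_0=I\,y_{p_0}\,P,\qquad y_p=\sum_{\pi\in\Gamma^*}M_{p,\pi}\,y_\pi,\quad p\in\Gamma,$$ over the complete semiring-semimodule pair $(S^{n\times n},V^n)$. Explicitly, with $x_p=(M^* )_{p,\epsilon}$ and $z_p=(M^{\omega,l})_p$: for all $p\in\Gamma$, $x_p=\sum_{\pi\in\Gamma^*}M_{p,\pi}x_\pi$ and $z_p=\sum_{\pi=p_1\dots p_k\in\Gamma^+}M_{p,\pi}\sum_{1\le j\le k}x_{p_1}\cdots x_{p_{j-1}}z_{p_j}$ (where $x_{p_1\dots p_k}=x_{p_1}\cdots x_{p_k}$, $x_\epsilon=E$), and $\|\mathcal P\|=(I x_{p_0}P,\ I z_{p_0})$.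
   Context: A complete semiring-semimodule pair $(S,V)$ (in the sense of Ésik and Kuich, "Modern Automata Theory") consists of a complete starsemiring $S$ (arbitrary sums with infinite associativity/commutativity/distributivity laws, star $s^*=\sum_{j\ge0}s^j$) and a complete $S$-semimodule $V$, with infinite products $\prod_{j\ge1}s_j\in V$ of sequences in $S$ satisfying the axioms of that framework. The quemiring $S\times V$ (and likewise $S^{n\times n}\times V^n$) has componentwise sum and product $(s,u)(s',u')=(ss',u+su')$; in the system $y_p=(x_p,z_p)$, $y_{p_1\dots p_k}=y_{p_1}\cdots y_{p_k}$, $y_\epsilon=(E,0)$, matrices act componentwise, and $I(s,u)P=(IsP,Iu)$. A pushdown transition matrix $M\in (S'^{n\times n})^{\Gamma^*\times\Gamma^*}$ ($\Gamma^*\times\Gamma^*$ matrix with $n\times n$ blocks over $S'$) satisfies (i) for each $p\in\Gamma$ only finitely many blocks $M_{p,\pi}$ are nonzero, and (ii) $M_{\pi_1,\pi_2}=M_{p,\pi}$ if $\pi_1=p\pi'$, $\pi_2=\pi\pi'$ for some $p\in\Gamma$, $\pi,\pi'\in\Gamma^*$, and $0$ otherwise. An $S'$-$\omega$-pushdown automaton $\mathcal P=(n,\Gamma,I,M,P,p_0,l)$ consists of $n\ge1$ (states $1,\dots,n$), an alphabet $\Gamma$, a pushdown transition matrix $M\in(S'^{n\times n})^{\Gamma^*\times\Gamma^*}$, $I\in S'^{1\times n}$, $P\in S'^{n\times1}$, $p_0\in\Gamma$, and $l\in\{0,\dots,n\}$. $M^*=\sum_{m\ge0}M^m$ with blocks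 $(M^* )_{\pi,\pi'}$; with $P_l=\{(j_1,j_2,\dots)\in\{1,\dots,n\}^\omega\mid j_t\le l\text{ for infinitely many }t\}$, $M^{\omega,l}\in (V^n)^{\Gamma^*}$ is given by $((M^{\omega,l})_\pi)_i=\sum_{\pi_1,\pi_2,\ldots\in\Gamma^*}\sum_{(j_1,j_2,\ldots)\in P_l}(M_{\pi,\pi_1})_{i,j_1}(M_{\pi_1,\pi_2})_{j_1,j_2}\cdots$. The behavior is $\|\mathcal P\|=I(M^* )_{p_0,\epsilon}P+I(M^{\omega,l})_{p_0}$, i.e. the element $(I(M^* )_{p_0,\epsilon}P,\ I(M^{\omega,l})_{p_0})$ of the quemiring $S\times V$. *)

theory Defs
  imports Main
begin

text \<open>Index sets of complete sums are subsets of the fixed "tag" type (nat => nat),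
  which has the cardinality of the continuum and is closed (up to bijection)
  under finite and countable products.  Sums over families indexed by other
  types are obtained by transporting the index set along an (arbitrarily
  chosen) injection into the tag type; by the partition axiom the value does
  not depend on the chosen injection.\<close>

type_synonym tag = "nat \<Rightarrow> nat"

definition gsum :: "((tag \<Rightarrow> 'a) \<Rightarrow> tag set \<Rightarrow> 'a) \<Rightarrow> ('i \<Rightarrow> 'a) \<Rightarrow> 'i set \<Rightarrow> 'a" where
  "gsum cs f I = (let e = (SOME e :: 'i \<Rightarrow> tag. inj e) in cs (\<lambda>t. f (inv e t)) (e ` I))"

definition complete_monoid :: "((tag \<Rightarrow> 'a::comm_monoid_add) \<Rightarrow> tag set \<Rightarrow> 'a) \<Rightarrow> bool" where
  "complete_monoid cs \<longleftrightarrow>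
     (\<forall>f g I. (\<forall>t\<in>I. f t = g t) \<longrightarrow> cs f I = cs g I) \<and>
     (\<forall>f. cs f {} = 0) \<and>
     (\<forall>f t. cs f {t} = f t) \<and>
     (\<forall>f t u. t \<noteq> u \<longrightarrow> cs f {t, u} = f t + f u) \<and>
     (\<forall>f I J (B :: tag \<Rightarrow> tag set).
        I = (\<Union>j\<in>J. B j) \<and> (\<forall>j\<in>J. \<forall>j'\<in>J. j \<noteq> j' \<longrightarrow> B j \<inter> B j' = {}) \<longrightarrow>
        cs f I = cs (\<lambda>j. cs f (B j)) J)"

definition complete_semiring :: "((tag \<Rightarrow> 's::semiring_1) \<Rightarrow> tag set \<Rightarrow> 's) \<Rightarrow> bool" where
  "complete_semiring csS \<longleftrightarrow> complete_monoid csS \<and>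
     (\<forall>f g I1 I2. csS f I1 * csS g I2 = gsum csS (\<lambda>(i, j). f i * g j) (I1 \<times> I2))"

definition complete_semimodule ::
  "((tag \<Rightarrow> 's::semiring_1) \<Rightarrow> tag set \<Rightarrow> 's) \<Rightarrow> ((tag \<Rightarrow> 'v::comm_monoid_add) \<Rightarrow> tag set \<Rightarrow> 'v)
     \<Rightarrow> ('s \<Rightarrow> 'v \<Rightarrow> 'v) \<Rightarrow> bool" where
  "complete_semimodule csS csV sm \<longleftrightarrow> complete_monoid csV \<and>
     (\<forall>s s' v. sm (s * s') v = sm s (sm s' v)) \<and>
     (\<forall>v. sm 1 v = v) \<and>
     (\<forall>s s' v. sm (s + s') v = sm s v + sm s' v) \<and>
     (\<forall>s v v'. sm s (v + v') = sm s v + sm s v') \<and>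
     (\<forall>v. sm 0 v = 0) \<and>
     (\<forall>s. sm s 0 = 0) \<and>
     (\<forall>s f I. sm s (csV f I) = csV (\<lambda>i. sm s (f i)) I) \<and>
     (\<forall>f I v. sm (csS f I) v = csV (\<lambda>i. sm (f i) v) I)"

definition complete_ss_pair ::
  "((tag \<Rightarrow> 's::semiring_1) \<Rightarrow> tag set \<Rightarrow> 's) \<Rightarrow> ((tag \<Rightarrow> 'v::comm_monoid_add) \<Rightarrow> tag set \<Rightarrow> 'v)
     \<Rightarrow> ('s \<Rightarrow> 'v \<Rightarrow> 'v) \<Rightarrow> ((nat \<Rightarrow> 's) \<Rightarrow> 'v) \<Rightarrow> bool" where
  "complete_ss_pair csS csV sm ip \<longleftrightarrow>
     complete_semiring csS \<and> complete_semimodule csS csV sm \<and>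
     (\<forall>s. ip s = sm (s 0) (ip (\<lambda>j. s (Suc j)))) \<and>
     (\<forall>s k. strict_mono k \<and> k 0 = 0 \<longrightarrow>
        ip s = ip (\<lambda>j. prod_list (map s [k j..<k (Suc j)]))) \<and>
     (\<forall>(f :: nat \<Rightarrow> tag \<Rightarrow> 's) (I :: nat \<Rightarrow> tag set).
        ip (\<lambda>j. csS (f j) (I j)) = gsum csV (\<lambda>\<sigma>. ip (\<lambda>j. f j (\<sigma> j))) {\<sigma>. \<forall>j. \<sigma> j \<in> I j})"

definition mm :: "nat \<Rightarrow> (nat \<Rightarrow> nat \<Rightarrow> 's::semiring_1) \<Rightarrow> (nat \<Rightarrow> nat \<Rightarrow> 's) \<Rightarrow> nat \<Rightarrow> nat \<Rightarrow> 's" where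
  "mm n A B i j = (\<Sum>k = 1..n. A i k * B k j)"

definition idm :: "nat \<Rightarrow> nat \<Rightarrow> 's::semiring_1" where
  "idm i j = (if i = j then 1 else 0)"

definition word_mat :: "nat \<Rightarrow> ('g \<Rightarrow> nat \<Rightarrow> nat \<Rightarrow> 's::semiring_1) \<Rightarrow> 'g list \<Rightarrow> nat \<Rightarrow> nat \<Rightarrow> 's" where
  "word_mat n x \<pi> = foldr (mm n) (map x \<pi>) idm"

definition mv :: "('s \<Rightarrow> 'v \<Rightarrow> 'v) \<Rightarrow> nat \<Rightarrow> (nat \<Rightarrow> nat \<Rightarrow> 's) \<Rightarrow> (nat \<Rightarrow> 'v::comm_monoid_add) \<Rightarrow> nat \<Rightarrow> 'v" where
  "mv sm n A v i = (\<Sum>k = 1..n. sm (A i k) (v k))"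

text \<open>A Gamma* x Gamma* matrix with n x n blocks: M pi1 pi2 i j = (M_{pi1,pi2})_{i,j}.\<close>
definition pushdown_matrix :: "nat \<Rightarrow> ('g list \<Rightarrow> 'g list \<Rightarrow> nat \<Rightarrow> nat \<Rightarrow> 's::zero) \<Rightarrow> bool" where
  "pushdown_matrix n M \<longleftrightarrow>
     (\<forall>p. finite {\<pi>. \<exists>i\<in>{1..n}. \<exists>j\<in>{1..n}. M [p] \<pi> i j \<noteq> 0}) \<and>
     (\<forall>p \<pi> \<pi>'. \<forall>i\<in>{1..n}. \<forall>j\<in>{1..n}. M (p # \<pi>') (\<pi> @ \<pi>') i j = M [p] \<pi> i j) \<and>
     (\<forall>\<pi>1 \<pi>2. (\<nexists>p \<pi> \<pi>'. \<pi>1 = p # \<pi>' \<and> \<pi>2 = \<pi> @ \<pi>') \<longrightarrow>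
        (\<forall>i\<in>{1..n}. \<forall>j\<in>{1..n}. M \<pi>1 \<pi>2 i j = 0))"

definition omega_pda :: "'s::zero set \<Rightarrow> nat \<Rightarrow> (nat \<Rightarrow> 's) \<Rightarrow> ('g list \<Rightarrow> 'g list \<Rightarrow> nat \<Rightarrow> nat \<Rightarrow> 's)
     \<Rightarrow> (nat \<Rightarrow> 's) \<Rightarrow> nat \<Rightarrow> bool" where
  "omega_pda S' n I M P l \<longleftrightarrow> n \<ge> 1 \<and> l \<le> n \<and> pushdown_matrix n M \<and>
     (\<forall>\<pi>1 \<pi>2. \<forall>i\<in>{1..n}. \<forall>j\<in>{1..n}. M \<pi>1 \<pi>2 i j \<in> S') \<and>
     (\<forall>i\<in>{1..n}. I i \<in> S') \<and> (\<forall>j\<in>{1..n}. P j \<in> S')"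

definition blockmul :: "((tag \<Rightarrow> 's::semiring_1) \<Rightarrow> tag set \<Rightarrow> 's) \<Rightarrow> nat
     \<Rightarrow> ('g list \<Rightarrow> 'g list \<Rightarrow> nat \<Rightarrow> nat \<Rightarrow> 's) \<Rightarrow> ('g list \<Rightarrow> 'g list \<Rightarrow> nat \<Rightarrow> nat \<Rightarrow> 's)
     \<Rightarrow> 'g list \<Rightarrow> 'g list \<Rightarrow> nat \<Rightarrow> nat \<Rightarrow> 's" where
  "blockmul csS n A B \<pi> \<pi>' i j = gsum csS (\<lambda>\<pi>''. \<Sum>k = 1..n. A \<pi> \<pi>'' i k * B \<pi>'' \<pi>' k j) UNIV"

fun mpow :: "((tag \<Rightarrow> 's::semiring_1) \<Rightarrow> tag set \<Rightarrow> 's) \<Rightarrow> nat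
     \<Rightarrow> ('g list \<Rightarrow> 'g list \<Rightarrow> nat \<Rightarrow> nat \<Rightarrow> 's) \<Rightarrow> nat \<Rightarrow> 'g list \<Rightarrow> 'g list \<Rightarrow> nat \<Rightarrow> nat \<Rightarrow> 's" where
  "mpow csS n M 0 = (\<lambda>\<pi> \<pi>' i j. if \<pi> = \<pi>' \<and> i = j then 1 else 0)"
| "mpow csS n M (Suc m) = blockmul csS n (mpow csS n M m) M"

definition mstar :: "((tag \<Rightarrow> 's::semiring_1) \<Rightarrow> tag set \<Rightarrow> 's) \<Rightarrow> nat
     \<Rightarrow> ('g list \<Rightarrow> 'g list \<Rightarrow> nat \<Rightarrow> nat \<Rightarrow> 's) \<Rightarrow> 'g list \<Rightarrow> 'g list \<Rightarrow> nat \<Rightarrow> nat \<Rightarrow> 's" where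
  "mstar csS n M \<pi> \<pi>' i j = gsum csS (\<lambda>m. mpow csS n M m \<pi> \<pi>' i j) UNIV"

text \<open>P_l, state sequences (j_1, j_2, ...) stored 0-indexed\<close>
definition Pl :: "nat \<Rightarrow> nat \<Rightarrow> (nat \<Rightarrow> nat) set" where
  "Pl n l = {js. (\<forall>t. js t \<in> {1..n}) \<and> infinite {t. js t \<le> l}}"

text \<open>((M^{omega,l})_pi)_i; ps t = pi_{t+1}, js t = j_{t+1}, pi_0 = pi, j_0 = i\<close>
definition momega :: "((tag \<Rightarrow> 'v::comm_monoid_add) \<Rightarrow> tag set \<Rightarrow> 'v) \<Rightarrow> ((nat \<Rightarrow> 's) \<Rightarrow> 'v) \<Rightarrow> nat \<Rightarrow> nat
     \<Rightarrow> ('g list \<Rightarrow> 'g list \<Rightarrow> nat \<Rightarrow> nat \<Rightarrow> 's) \<Rightarrow> 'g list \<Rightarrow> nat \<Rightarrow> 'v" where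
  "momega csV ip n l M \<pi> i =
     gsum csV (\<lambda>ps. gsum csV (\<lambda>js.
        ip (\<lambda>t. M (if t = 0 then \<pi> else ps (t - 1)) (ps t) (if t = 0 then i else js (t - 1)) (js t)))
       (Pl n l)) UNIV"

definition behavior :: "((tag \<Rightarrow> 's::semiring_1) \<Rightarrow> tag set \<Rightarrow> 's) \<Rightarrow> ((tag \<Rightarrow> 'v::comm_monoid_add) \<Rightarrow> tag set \<Rightarrow> 'v)
     \<Rightarrow> ('s \<Rightarrow> 'v \<Rightarrow> 'v) \<Rightarrow> ((nat \<Rightarrow> 's) \<Rightarrow> 'v) \<Rightarrow> nat \<Rightarrow> (nat \<Rightarrow> 's)
     \<Rightarrow> ('g list \<Rightarrow> 'g list \<Rightarrow> nat \<Rightarrow> nat \<Rightarrow> 's) \<Rightarrow> (nat \<Rightarrow> 's) \<Rightarrow> 'g \<Rightarrow> nat \<Rightarrow> 's \<times> 'v" where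
  "behavior csS csV sm ip n I M P p0 l =
     ((\<Sum>i = 1..n. \<Sum>j = 1..n. I i * mstar csS n M [p0] [] i j * P j),
      (\<Sum>i = 1..n. sm (I i) (momega csV ip n l M [p0] i)))"

end

theory Submission imports Defs "HOL-Library.Countable" begin


definition tg :: "'i itself \<Rightarrow> bool" where
  "tg (_::'i itself) \<longleftrightarrow> (\<exists>e::'i \<Rightarrow> tag. inj e)"

definition te :: "'i \<Rightarrow> tag" where "te = (SOME e. inj e)"

lemma te_inj: "tg TYPE('i) \<Longrightarrow> inj (te :: 'i \<Rightarrow> tag)"
  unfolding tg_def te_def by (erule someI_ex)

lemma inv_te[simp]: "tg TYPE('i) \<Longrightarrow> inv te (te (i::'i)) = i"
  using te_inj by (metis inv_f_f)

lemma gsum_te: "gsum cs f I = cs (\<lambda>t. f (inv te t)) (te ` I)"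
  by (simp add: gsum_def te_def Let_def)

lemma tg_countable: "tg TYPE('a::countable)"
proof -
  have "inj (\<lambda>(x::'a) (_::nat). to_nat x)" by (auto simp: inj_def dest!: fun_cong)
  then show ?thesis unfolding tg_def by blast
qed

lemma tg_tag: "tg TYPE(tag)"
  unfolding tg_def using inj_on_id by blast

lemma tg_prod: assumes "tg TYPE('a)" "tg TYPE('b)" shows "tg TYPE('a \<times> 'b)"
proof -
  from assms obtain e1 :: "'a \<Rightarrow> tag" and e2 :: "'b \<Rightarrow> tag" where i: "inj e1" "inj e2"
    unfolding tg_def by blast
  define e where "e = (\<lambda>(a,b) (m::nat). if even m then e1 a (m div 2) else e2 b (m div 2))"
  have "inj e"
  proof (rule injI)
    fix x y assume h: "e x = e y"
    obtain a b where x: "x = (a,b)" by (cases x)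
    obtain a' b' where y: "y = (a',b')" by (cases y)
    have "e1 a = e1 a'"
    proof
      fix m show "e1 a m = e1 a' m" using fun_cong[OF h, of "2*m"] by (simp add: e_def x y)
    qed
    moreover have "e2 b = e2 b'"
    proof
      fix m show "e2 b m = e2 b' m" using fun_cong[OF h, of "2*m+1"] by (simp add: e_def x y)
    qed
    ultimately show "x = y" using i by (simp add: x y inj_eq)
  qed
  then show ?thesis unfolding tg_def by blast
qed

lemma tg_fun: assumes "tg TYPE('a)" shows "tg TYPE(nat \<Rightarrow> 'a)"
proof -
  from assms obtain e1 :: "'a \<Rightarrow> tag" where i: "inj e1" unfolding tg_def by blast
  define e where "e = (\<lambda>f m. e1 (f (fst (prod_decode m))) (snd (prod_decode m)))"
  have "inj e"
  proof (rule injI)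
    fix f g assume h: "e f = e g"
    show "f = g"
    proof
      fix a
      have "e1 (f a) = e1 (g a)"
      proof
        fix b show "e1 (f a) b = e1 (g a) b"
          using fun_cong[OF h, of "prod_encode (a,b)"] by (simp add: e_def)
      qed
      then show "f a = g a" using i by (simp add: inj_eq)
    qed
  qed
  then show ?thesis unfolding tg_def by blast
qed

lemma tg_bool: "tg TYPE(bool)" by (rule tg_countable)
lemma tg_nat: "tg TYPE(nat)" by (rule tg_countable)
lemma tg_unit: "tg TYPE(unit)" by (rule tg_countable)

locale cmon =
  fixes cs :: "(tag \<Rightarrow> 'a::comm_monoid_add) \<Rightarrow> tag set \<Rightarrow> 'a"
  assumes cm: "complete_monoid cs"
begin

lemma cm1: "\<forall>f g I. (\<forall>t\<in>I. f t = g t) \<longrightarrow> cs f I = cs g I"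
  using cm unfolding complete_monoid_def by (elim conjE) assumption
lemma cm2: "\<forall>f. cs f {} = 0"
  using cm unfolding complete_monoid_def by (elim conjE) assumption
lemma cm3: "\<forall>f t. cs f {t} = f t"
  using cm unfolding complete_monoid_def by (elim conjE) assumption
lemma cm4: "\<forall>f t u. t \<noteq> u \<longrightarrow> cs f {t, u} = f t + f u"
  using cm unfolding complete_monoid_def by (elim conjE) assumption
lemma cm5: "\<forall>f I J (B :: tag \<Rightarrow> tag set).
        I = (\<Union>j\<in>J. B j) \<and> (\<forall>j\<in>J. \<forall>j'\<in>J. j \<noteq> j' \<longrightarrow> B j \<inter> B j' = {}) \<longrightarrow>
        cs f I = cs (\<lambda>j. cs f (B j)) J"
  using cm unfolding complete_monoid_def by (elim conjE) assumption

lemma cs_cong: "(\<And>t. t\<in>I \<Longrightarrow> f t = g t) \<Longrightarrow> cs f I = cs g I"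
  using cm1 by blast
lemma cs_empty: "cs f {} = 0"
  using cm2 by blast
lemma cs_single: "cs f {t} = f t"
  using cm3 by blast
lemma cs_two: "t \<noteq> u \<Longrightarrow> cs f {t,u} = f t + f u"
  using cm4 by blast
lemma cs_part: "I = (\<Union>j\<in>J. B j) \<Longrightarrow> (\<And>j j'. j\<in>J \<Longrightarrow> j'\<in>J \<Longrightarrow> j\<noteq>j' \<Longrightarrow> B j \<inter> B j' = {})
   \<Longrightarrow> cs f I = cs (\<lambda>j. cs f (B j)) J"
  using cm5[rule_format, where f=f and I=I and J=J and B=B] by blast

lemma gsum_cong: "tg TYPE('i) \<Longrightarrow> (\<And>i. i\<in>I \<Longrightarrow> f i = g i) \<Longrightarrow> gsum cs f (I::'i set) = gsum cs g I"
  unfolding gsum_te by (rule cs_cong) auto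

lemma gsum_empty: "gsum cs f {} = 0"
  unfolding gsum_te by (simp add: cs_empty)

lemma gsum_single: "tg TYPE('i) \<Longrightarrow> gsum cs f {i::'i} = f i"
  unfolding gsum_te by (simp add: cs_single)

lemma gsum_zero: "(\<And>i. i\<in>I \<Longrightarrow> f i = 0) \<Longrightarrow> tg TYPE('i) \<Longrightarrow> gsum cs f (I::'i set) = 0"
proof -
  assume z: "\<And>i. i\<in>I \<Longrightarrow> f i = 0" and t: "tg TYPE('i)"
  have "cs (\<lambda>_. 0) {} = cs (\<lambda>j. cs (\<lambda>_. 0) {}) (te ` I)"
    by (rule cs_part) auto
  then have "cs (\<lambda>j. 0) (te ` I) = 0" by (simp add: cs_empty)
  moreover have "gsum cs f I = cs (\<lambda>j. 0) (te ` I)"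
    unfolding gsum_te by (rule cs_cong) (use z t in auto)
  ultimately show ?thesis by simp
qed

lemma gsum_part:
  assumes ti: "tg TYPE('i)" and tj: "tg TYPE('j)"
    and dis: "\<And>j j'. j\<in>J \<Longrightarrow> j'\<in>J \<Longrightarrow> j\<noteq>j' \<Longrightarrow> B j \<inter> B j' = {}"
  shows "gsum cs f (\<Union>j\<in>(J::'j set). (B j :: 'i set)) = gsum cs (\<lambda>j. gsum cs f (B j)) J"
proof -
  have ii: "inj (te::'i\<Rightarrow>tag)" "inj (te::'j\<Rightarrow>tag)" using ti tj by (auto intro: te_inj)
  have "cs (\<lambda>t. f (inv te t)) (te ` (\<Union>j\<in>J. B j)) =
        cs (\<lambda>t. cs (\<lambda>t. f (inv te t)) (te ` B (inv te t))) (te ` J)"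
  proof (rule cs_part)
    show "te ` (\<Union>j\<in>J. B j) = (\<Union>t\<in>te ` J. te ` B (inv te t))" using tj by auto
  next
    fix t t' assume "t \<in> te ` J" "t' \<in> te ` J" "t \<noteq> t'"
    then obtain j j' where "j\<in>J" "j'\<in>J" "t = te j" "t' = te j'" "j \<noteq> j'" by auto
    then show "te ` B (inv te t) \<inter> te ` B (inv te t') = {}"
      using dis[of j j'] tj ii by (auto simp: inj_eq)
  qed
  then show ?thesis unfolding gsum_te by simp
qed

lemma gsum_reindex:
  assumes ti: "tg TYPE('i)" and tj: "tg TYPE('j)" and inj: "inj_on h J"
  shows "gsum cs f (h ` (J::'j set) :: 'i set) = gsum cs (\<lambda>j. f (h j)) J"
proof -
  have "h ` J = (\<Union>j\<in>J. {h j})" by auto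
  then have "gsum cs f (h ` J) = gsum cs (\<lambda>j. gsum cs f {h j}) J"
    using gsum_part[OF ti tj, of J "\<lambda>j. {h j}" f] inj by (auto simp: inj_on_def)
  also have "\<dots> = gsum cs (\<lambda>j. f (h j)) J" by (rule gsum_cong[OF tj]) (simp add: gsum_single[OF ti])
  finally show ?thesis .
qed

lemma gsum_bij:
  assumes ti: "tg TYPE('i)" and tj: "tg TYPE('j)" and b: "bij_betw h J I"
  shows "gsum cs f (I :: 'i set) = gsum cs (\<lambda>j. f (h j)) (J::'j set)"
  using gsum_reindex[OF ti tj, of h J f] b by (simp add: bij_betw_def)

lemma gsum_union:
  assumes ti: "tg TYPE('i)" and d: "A \<inter> B = {}"
  shows "gsum cs f (A \<union> B :: 'i set) = gsum cs f A + gsum cs f B"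
proof -
  have e: "A \<union> B = (\<Union>b\<in>{True,False}. if b then A else B)" by auto
  have "gsum cs f (\<Union>b\<in>{True,False}. if b then A else B) = gsum cs (\<lambda>b. gsum cs f (if b then A else B)) {True, False}"
    by (rule gsum_part[OF ti tg_bool]) (use d in auto)
  then have "gsum cs f (A \<union> B) = gsum cs (\<lambda>b. gsum cs f (if b then A else B)) {True, False}"
    using e by simp
  also have "\<dots> = gsum cs f A + gsum cs f B"
  proof -
    have "inj (te :: bool \<Rightarrow> tag)" by (rule te_inj[OF tg_bool])
    then have "te True \<noteq> (te False :: tag)" by (auto simp: inj_eq)
    then show ?thesis unfolding gsum_te[of cs _ "{True,False}"] using tg_bool
      by (simp add: cs_two)
  qed
  finally show ?thesis .
qed

lemma gsum_insert: "tg TYPE('i) \<Longrightarrow> (i::'i) \<notin> F \<Longrightarrow> gsum cs f (insert i F) = f i + gsum cs f F"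
  using gsum_union[of "{i}" F f] by (simp add: gsum_single)

lemma gsum_finite: assumes ti: "tg TYPE('i)" and fin: "finite (F::'i set)" shows "gsum cs f F = sum f F"
  using fin
proof (induction F rule: finite_induct)
  case empty then show ?case by (simp add: gsum_empty)
next
  case (insert x F) then show ?case by (simp add: gsum_insert ti)
qed

lemma gsum_mono_zero:
  assumes ti: "tg TYPE('i)" and s: "J \<subseteq> I" and z: "\<And>i. i \<in> I - J \<Longrightarrow> f i = 0"
  shows "gsum cs f (I::'i set) = gsum cs f J"
proof -
  have "I = J \<union> (I - J)" using s by auto
  then have "gsum cs f I = gsum cs f J + gsum cs f (I - J)" using gsum_union[OF ti] by (metis Diff_disjoint)
  moreover have "gsum cs f (I - J) = 0" by (rule gsum_zero) (use z ti in auto)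
  ultimately show ?thesis by simp
qed

lemma gsum_Sigma:
  assumes ti: "tg TYPE('i)" and tj: "tg TYPE('j)"
  shows "gsum cs f (Sigma (I::'i set) (B::'i \<Rightarrow> 'j set)) = gsum cs (\<lambda>i. gsum cs (\<lambda>j. f (i,j)) (B i)) I"
proof -
  have tij: "tg TYPE('i \<times> 'j)" by (rule tg_prod[OF ti tj])
  have "Sigma I B = (\<Union>i\<in>I. Pair i ` B i)" by auto
  then have "gsum cs f (Sigma I B) = gsum cs (\<lambda>i. gsum cs f (Pair i ` B i)) I"
    using gsum_part[OF tij ti, of I "\<lambda>i. Pair i ` B i" f] by auto
  also have "\<dots> = gsum cs (\<lambda>i. gsum cs (\<lambda>j. f (i,j)) (B i)) I"
    by (rule gsum_cong[OF ti]) (rule gsum_reindex[OF tij tj], simp add: inj_on_def)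
  finally show ?thesis .
qed

lemma gsum_swap:
  assumes ti: "tg TYPE('i)" and tj: "tg TYPE('j)"
  shows "gsum cs (\<lambda>i. gsum cs (\<lambda>j. f i j) J) (I::'i set) = gsum cs (\<lambda>j. gsum cs (\<lambda>i. f i j) I) (J::'j set)"
proof -
  have "gsum cs (\<lambda>i. gsum cs (\<lambda>j. f i j) J) I = gsum cs (\<lambda>(i,j). f i j) (I \<times> J)"
    using gsum_Sigma[OF ti tj, of "\<lambda>(i,j). f i j" I "\<lambda>_. J"] by simp
  also have "\<dots> = gsum cs (\<lambda>(j,i). f i j) (J \<times> I)"
  proof -
    have e: "I \<times> J = (\<lambda>(j,i). (i,j)) ` (J \<times> I)" by auto
    have "gsum cs (\<lambda>(i,j). f i j) ((\<lambda>(j,i). (i,j)) ` (J \<times> I)) = gsum cs (\<lambda>x. (\<lambda>(i,j). f i j) ((\<lambda>(j,i). (i,j)) x)) (J \<times> I)"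
      by (rule gsum_reindex[OF tg_prod[OF ti tj] tg_prod[OF tj ti]]) (auto simp: inj_on_def)
    also have "\<dots> = gsum cs (\<lambda>(j,i). f i j) (J \<times> I)" by (rule gsum_cong[OF tg_prod[OF tj ti]]) auto
    finally show ?thesis using e by simp
  qed
  also have "\<dots> = gsum cs (\<lambda>j. gsum cs (\<lambda>i. f i j) I) J"
    using gsum_Sigma[OF tj ti, of "\<lambda>(j,i). f i j" J "\<lambda>_. I"] by simp
  finally show ?thesis .
qed

lemma gsum_bool: "gsum cs g (UNIV::bool set) = g True + g False"
proof -
  have u: "(UNIV::bool set) = insert True {False}" by auto
  show ?thesis unfolding u by (subst gsum_insert[OF tg_bool]) (auto simp: gsum_single[OF tg_bool])
qed

lemma gsum_add:
  assumes ti: "tg TYPE('i)"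
  shows "gsum cs (\<lambda>i. f i + g i) (I::'i set) = gsum cs f I + gsum cs g I"
proof -
  let ?F = "\<lambda>i b. if b then f i else g i"
  have "gsum cs (\<lambda>i. f i + g i) I = gsum cs (\<lambda>i. gsum cs (\<lambda>b. ?F i b) UNIV) I"
    by (rule gsum_cong[OF ti]) (simp add: gsum_bool)
  also have "\<dots> = gsum cs (\<lambda>b. gsum cs (\<lambda>i. ?F i b) I) UNIV" by (rule gsum_swap[OF ti tg_bool])
  also have "\<dots> = gsum cs f I + gsum cs g I" by (simp add: gsum_bool)
  finally show ?thesis .
qed

lemma gsum_sum:
  assumes ti: "tg TYPE('i)" and fk: "finite K"
  shows "gsum cs (\<lambda>i. \<Sum>k\<in>K. f i k) (I::'i set) = (\<Sum>k\<in>K. gsum cs (\<lambda>i. f i k) I)"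
  using fk
proof (induction K rule: finite_induct)
  case empty then show ?case by (simp add: gsum_zero ti)
next
  case (insert x F) then show ?case by (simp add: gsum_add[OF ti])
qed

end


lemma prod_list_zero: "(0::'a::semiring_1) \<in> set xs \<Longrightarrow> prod_list xs = 0"
  by (induction xs) auto

locale cssp =
  fixes csS :: "(tag \<Rightarrow> 's::semiring_1) \<Rightarrow> tag set \<Rightarrow> 's"
    and csV :: "(tag \<Rightarrow> 'v::comm_monoid_add) \<Rightarrow> tag set \<Rightarrow> 'v"
    and sm :: "'s \<Rightarrow> 'v \<Rightarrow> 'v"
    and ip :: "(nat \<Rightarrow> 's) \<Rightarrow> 'v"
  assumes ssp: "complete_ss_pair csS csV sm ip"
begin

lemma csr: "complete_semiring csS" using ssp unfolding complete_ss_pair_def by (elim conjE) assumption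
lemma csm: "complete_semimodule csS csV sm" using ssp unfolding complete_ss_pair_def by (elim conjE) assumption

lemma cmS: "complete_monoid csS" using csr unfolding complete_semiring_def by (elim conjE) assumption
lemma cmV: "complete_monoid csV" using csm unfolding complete_semimodule_def by (elim conjE) assumption
sublocale S: cmon csS by (rule cmon.intro, rule cmS)
sublocale V: cmon csV by (rule cmon.intro, rule cmV)

lemma ax_mult: "csS f I1 * csS g I2 = gsum csS (\<lambda>(i, j). f i * g j) (I1 \<times> I2)"
proof -
  have A: "\<forall>f g I1 I2. csS f I1 * csS g I2 = gsum csS (\<lambda>(i, j). f i * g j) (I1 \<times> I2)"
    using csr unfolding complete_semiring_def by (elim conjE) assumption
  show ?thesis by (rule A[rule_format])
qed

lemma sm_mult: "sm (s * s') v = sm s (sm s' v)"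
proof -
  have A: "\<forall>s s' v. sm (s * s') v = sm s (sm s' v)"
    using csm unfolding complete_semimodule_def by (elim conjE) assumption
  show ?thesis by (rule A[rule_format])
qed
lemma sm_one[simp]: "sm 1 v = v"
proof -
  have A: "\<forall>v. sm 1 v = v"
    using csm unfolding complete_semimodule_def by (elim conjE) assumption
  show ?thesis by (rule A[rule_format])
qed
lemma sm_addl: "sm (s + s') v = sm s v + sm s' v"
proof -
  have A: "\<forall>s s' v. sm (s + s') v = sm s v + sm s' v"
    using csm unfolding complete_semimodule_def by (elim conjE) assumption
  show ?thesis by (rule A[rule_format])
qed
lemma sm_addr: "sm s (v + v') = sm s v + sm s v'"
proof -
  have A: "\<forall>s v v'. sm s (v + v') = sm s v + sm s v'"
    using csm unfolding complete_semimodule_def by (elim conjE) assumption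
  show ?thesis by (rule A[rule_format])
qed
lemma sm_zerol[simp]: "sm 0 v = 0"
proof -
  have A: "\<forall>v. sm 0 v = 0"
    using csm unfolding complete_semimodule_def by (elim conjE) assumption
  show ?thesis by (rule A[rule_format])
qed
lemma sm_zeror[simp]: "sm s 0 = 0"
proof -
  have A: "\<forall>s. sm s 0 = 0"
    using csm unfolding complete_semimodule_def by (elim conjE) assumption
  show ?thesis by (rule A[rule_format])
qed
lemma sm_cs: "sm s (csV f I) = csV (\<lambda>i. sm s (f i)) I"
proof -
  have A: "\<forall>s f I. sm s (csV f I) = csV (\<lambda>i. sm s (f i)) I"
    using csm unfolding complete_semimodule_def by (elim conjE) assumption
  show ?thesis by (rule A[rule_format])
qed
lemma cs_sm: "sm (csS f I) v = csV (\<lambda>i. sm (f i) v) I"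
proof -
  have A: "\<forall>f I v. sm (csS f I) v = csV (\<lambda>i. sm (f i) v) I"
    using csm unfolding complete_semimodule_def by (elim conjE) assumption
  show ?thesis by (rule A[rule_format])
qed

lemma ip_step: "ip s = sm (s 0) (ip (\<lambda>j. s (Suc j)))"
proof -
  have A: "\<forall>s. ip s = sm (s 0) (ip (\<lambda>j. s (Suc j)))"
    using ssp unfolding complete_ss_pair_def by (elim conjE) assumption
  show ?thesis by (rule A[rule_format])
qed

lemma sm_gsum: "sm s (gsum csV f I) = gsum csV (\<lambda>i. sm s (f i)) I"
  unfolding gsum_te by (rule sm_cs)
lemma gsum_sm: "sm (gsum csS f I) v = gsum csV (\<lambda>i. sm (f i) v) I"
  unfolding gsum_te by (rule cs_sm)

lemma sm_sum: "sm s (\<Sum>k\<in>K. f k) = (\<Sum>k\<in>K. sm s (f k))"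
  by (induction K rule: infinite_finite_induct) (auto simp: sm_addr)
lemma sum_sm: "sm (\<Sum>k\<in>K. f k) v = (\<Sum>k\<in>K. sm (f k) v)"
  by (induction K rule: infinite_finite_induct) (auto simp: sm_addl)

lemma ip_prefix: "ip s = sm (prod_list (map s [0..<m])) (ip (\<lambda>t. s (t + m)))"
proof (induction m arbitrary: s)
  case 0 then show ?case by simp
next
  case (Suc m)
  have "ip s = sm (s 0) (ip (\<lambda>j. s (Suc j)))" by (rule ip_step)
  also have "ip (\<lambda>j. s (Suc j)) = sm (prod_list (map (\<lambda>j. s (Suc j)) [0..<m])) (ip (\<lambda>t. s (Suc (t + m))))"
    using Suc[of "\<lambda>j. s (Suc j)"] by simp
  also have "prod_list (map (\<lambda>j. s (Suc j)) [0..<m]) = prod_list (map s [1..<Suc m])"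
    by (simp add: map_Suc_upt[symmetric] comp_def del: upt_Suc)
  finally have "ip s = sm (s 0 * prod_list (map s [1..<Suc m])) (ip (\<lambda>t. s (t + Suc m)))"
    by (simp add: sm_mult)
  moreover have "s 0 * prod_list (map s [1..<Suc m]) = prod_list (map s [0..<Suc m])"
    by (simp add: upt_conv_Cons del: upt_Suc)
  ultimately show ?case by simp
qed

lemma ip_zero: "s t = 0 \<Longrightarrow> ip s = 0"
proof -
  assume z: "s t = 0"
  have "prod_list (map s [0..<Suc t]) = 0" by (rule prod_list_zero) (use z in force)
  then show ?thesis using ip_prefix[of s "Suc t"] by simp
qed

lemma S_mult:
  assumes ti: "tg TYPE('i)" and tj: "tg TYPE('j)"
  shows "gsum csS f (I::'i set) * gsum csS g (J::'j set) = gsum csS (\<lambda>(i,j). f i * g j) (I \<times> J)"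
proof -
  have "gsum csS f I * gsum csS g J = csS (\<lambda>t. f (inv te t)) (te ` I) * csS (\<lambda>t. g (inv te t)) (te ` J)"
    by (simp add: gsum_te)
  also have "\<dots> = gsum csS (\<lambda>(a,b). f (inv te a) * g (inv te b)) (te ` I \<times> te ` J)"
    by (rule ax_mult)
  also have "te ` I \<times> te ` J = (\<lambda>(i,j). (te i, te j)) ` (I \<times> J)" by auto
  also have "gsum csS (\<lambda>(a,b). f (inv te a) * g (inv te b)) ((\<lambda>(i,j). (te i, te j)) ` (I \<times> J))
     = gsum csS (\<lambda>x. (\<lambda>(a,b). f (inv te a) * g (inv te b)) ((\<lambda>(i,j). (te i, te j)) x)) (I \<times> J)"
    by (rule S.gsum_reindex[OF tg_prod[OF tg_tag tg_tag] tg_prod[OF ti tj]])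
       (use te_inj[OF ti] te_inj[OF tj] in \<open>auto simp: inj_on_def dest: injD\<close>)
  also have "\<dots> = gsum csS (\<lambda>(i,j). f i * g j) (I \<times> J)"
    by (rule S.gsum_cong[OF tg_prod[OF ti tj]]) (auto simp: ti tj)
  finally show ?thesis .
qed

lemma S_lmult:
  assumes ti: "tg TYPE('i)"
  shows "c * gsum csS f (I::'i set) = gsum csS (\<lambda>i. c * f i) I"
proof -
  have "c * gsum csS f I = gsum csS (\<lambda>_. c) {()} * gsum csS f I"
    by (simp add: S.gsum_single[OF tg_unit])
  also have "\<dots> = gsum csS (\<lambda>(u,i). c * f i) ({()} \<times> I)" by (rule S_mult[OF tg_unit ti])
  also have "\<dots> = gsum csS (\<lambda>u. gsum csS (\<lambda>i. c * f i) I) {()}"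
    using S.gsum_Sigma[OF tg_unit ti, of "\<lambda>(u,i). c * f i" "{()}" "\<lambda>_. I"] by simp
  also have "\<dots> = gsum csS (\<lambda>i. c * f i) I" by (simp add: S.gsum_single[OF tg_unit])
  finally show ?thesis .
qed

lemma S_rmult:
  assumes ti: "tg TYPE('i)"
  shows "gsum csS f (I::'i set) * c = gsum csS (\<lambda>i. f i * c) I"
proof -
  have "gsum csS f I * c = gsum csS f I * gsum csS (\<lambda>_. c) {()}"
    by (simp add: S.gsum_single[OF tg_unit])
  also have "\<dots> = gsum csS (\<lambda>(i,u). f i * c) (I \<times> {()})" by (rule S_mult[OF ti tg_unit])
  also have "\<dots> = gsum csS (\<lambda>i. gsum csS (\<lambda>u. f i * c) {()}) I"
    using S.gsum_Sigma[OF ti tg_unit, of "\<lambda>(i,u). f i * c" I "\<lambda>_. {()}"] by simp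
  also have "\<dots> = gsum csS (\<lambda>i. f i * c) I" by (simp add: S.gsum_single[OF tg_unit])
  finally show ?thesis .
qed

end


locale pda = cssp csS csV sm ip
  for csS :: "(tag \<Rightarrow> 's::semiring_1) \<Rightarrow> tag set \<Rightarrow> 's"
  and csV :: "(tag \<Rightarrow> 'v::comm_monoid_add) \<Rightarrow> tag set \<Rightarrow> 'v"
  and sm and ip +
  fixes n :: nat and M :: "'g::finite list \<Rightarrow> 'g list \<Rightarrow> nat \<Rightarrow> nat \<Rightarrow> 's"
  assumes pm: "pushdown_matrix n M"
begin

lemma tgL: "tg TYPE('g list)" by (rule tg_countable)

lemma pm1: "\<forall>p. finite {\<pi>. \<exists>i\<in>{1..n}. \<exists>j\<in>{1..n}. M [p] \<pi> i j \<noteq> 0}"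
  using pm unfolding pushdown_matrix_def by (elim conjE) assumption
lemma pm2: "\<forall>p \<pi> \<pi>'. \<forall>i\<in>{1..n}. \<forall>j\<in>{1..n}. M (p # \<pi>') (\<pi> @ \<pi>') i j = M [p] \<pi> i j"
  using pm unfolding pushdown_matrix_def by (elim conjE) assumption
lemma pm3: "\<forall>\<pi>1 \<pi>2. (\<nexists>p \<pi> \<pi>'. \<pi>1 = p # \<pi>' \<and> \<pi>2 = \<pi> @ \<pi>') \<longrightarrow>
        (\<forall>i\<in>{1..n}. \<forall>j\<in>{1..n}. M \<pi>1 \<pi>2 i j = 0)"
  using pm unfolding pushdown_matrix_def by (elim conjE) assumption

lemma PD1: "i \<in> {1..n} \<Longrightarrow> j \<in> {1..n} \<Longrightarrow> M [] c i j = 0"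
  using pm3 by blast

lemma PD4: "i \<in> {1..n} \<Longrightarrow> j \<in> {1..n} \<Longrightarrow> M (q # \<rho>) (\<tau> @ \<rho>) i j = M [q] \<tau> i j"
  using pm2 by blast

lemma PD3: "i \<in> {1..n} \<Longrightarrow> j \<in> {1..n} \<Longrightarrow> (\<nexists>\<tau>. c = \<tau> @ \<rho>) \<Longrightarrow> M (q # \<rho>) c i j = 0"
proof -
  assume a: "i \<in> {1..n}" "j \<in> {1..n}" "\<nexists>\<tau>. c = \<tau> @ \<rho>"
  have "\<nexists>p \<pi> \<pi>'. q # \<rho> = p # \<pi>' \<and> c = \<pi> @ \<pi>'" using a(3) by blast
  then show ?thesis using pm3 a(1,2) by blast
qed

lemma PD2: assumes "\<sigma> \<noteq> []" "i \<in> {1..n}" "j \<in> {1..n}"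
  shows "M (\<sigma> @ \<pi>') (\<tau> @ \<pi>') i j = M \<sigma> \<tau> i j"
proof -
  obtain q \<rho> where s: "\<sigma> = q # \<rho>" using assms(1) by (cases \<sigma>) auto
  show ?thesis
  proof (cases "\<exists>\<tau>'. \<tau> = \<tau>' @ \<rho>")
    case True
    then obtain \<tau>' where t: "\<tau> = \<tau>' @ \<rho>" by blast
    have "M (q # (\<rho> @ \<pi>')) (\<tau>' @ (\<rho> @ \<pi>')) i j = M [q] \<tau>' i j" by (rule PD4[OF assms(2,3)])
    moreover have "M (q # \<rho>) (\<tau>' @ \<rho>) i j = M [q] \<tau>' i j" by (rule PD4[OF assms(2,3)])
    ultimately show ?thesis by (simp add: s t)
  next
    case False
    have "M (q # (\<rho> @ \<pi>')) (\<tau> @ \<pi>') i j = 0"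
      by (rule PD3[OF assms(2,3)]) (use False in auto)
    moreover have "M (q # \<rho>) \<tau> i j = 0" by (rule PD3[OF assms(2,3)]) (use False in auto)
    ultimately show ?thesis by (simp add: s)
  qed
qed

lemma if_mult1: "(if P then 1 else 0) * (x::'s) = (if P then x else 0)" by simp
lemma if_mult2: "(x::'s) * (if P then 1 else 0) = (if P then x else 0)" by simp

abbreviation mp where "mp m \<equiv> mpow csS n M m"
abbreviation bm where "bm A B \<equiv> blockmul csS n A B"

lemma bm_assoc: fixes A B C :: "'g list \<Rightarrow> 'g list \<Rightarrow> nat \<Rightarrow> nat \<Rightarrow> 's"
  shows "bm (bm A B) C \<pi> \<pi>' i j = bm A (bm B C) \<pi> \<pi>' i j"
proof -
  define F where "F \<rho> \<sigma> k l = A \<pi> \<sigma> i l * B \<sigma> \<rho> l k * C \<rho> \<pi>' k j" for \<rho> \<sigma> k l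
  have L: "bm (bm A B) C \<pi> \<pi>' i j = gsum csS (\<lambda>\<rho>. gsum csS (\<lambda>\<sigma>. \<Sum>k=1..n. \<Sum>l=1..n. F \<rho> \<sigma> k l) UNIV) UNIV"
    unfolding blockmul_def
  proof (rule S.gsum_cong[OF tgL])
    fix \<rho>
    have "(\<Sum>k = 1..n. gsum csS (\<lambda>\<sigma>. \<Sum>l = 1..n. A \<pi> \<sigma> i l * B \<sigma> \<rho> l k) UNIV * C \<rho> \<pi>' k j)
        = (\<Sum>k = 1..n. gsum csS (\<lambda>\<sigma>. \<Sum>l = 1..n. F \<rho> \<sigma> k l) UNIV)"
      by (rule sum.cong[OF refl]) (simp add: S_rmult[OF tgL] sum_distrib_right F_def)
    also have "\<dots> = gsum csS (\<lambda>\<sigma>. \<Sum>k=1..n. \<Sum>l=1..n. F \<rho> \<sigma> k l) UNIV"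
      by (rule S.gsum_sum[OF tgL, symmetric]) simp
    finally show "(\<Sum>k = 1..n. gsum csS (\<lambda>\<sigma>. \<Sum>l = 1..n. A \<pi> \<sigma> i l * B \<sigma> \<rho> l k) UNIV * C \<rho> \<pi>' k j)
        = gsum csS (\<lambda>\<sigma>. \<Sum>k=1..n. \<Sum>l=1..n. F \<rho> \<sigma> k l) UNIV" .
  qed
  have R: "bm A (bm B C) \<pi> \<pi>' i j = gsum csS (\<lambda>\<sigma>. gsum csS (\<lambda>\<rho>. \<Sum>l=1..n. \<Sum>k=1..n. F \<rho> \<sigma> k l) UNIV) UNIV"
    unfolding blockmul_def
  proof (rule S.gsum_cong[OF tgL])
    fix \<sigma>
    have "(\<Sum>l = 1..n. A \<pi> \<sigma> i l * gsum csS (\<lambda>\<rho>. \<Sum>k = 1..n. B \<sigma> \<rho> l k * C \<rho> \<pi>' k j) UNIV)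
        = (\<Sum>l = 1..n. gsum csS (\<lambda>\<rho>. \<Sum>k = 1..n. F \<rho> \<sigma> k l) UNIV)"
      by (rule sum.cong[OF refl]) (simp add: S_lmult[OF tgL] sum_distrib_left F_def mult.assoc)
    also have "\<dots> = gsum csS (\<lambda>\<rho>. \<Sum>l=1..n. \<Sum>k=1..n. F \<rho> \<sigma> k l) UNIV"
      by (rule S.gsum_sum[OF tgL, symmetric]) simp
    finally show "(\<Sum>l = 1..n. A \<pi> \<sigma> i l * gsum csS (\<lambda>\<rho>. \<Sum>k = 1..n. B \<sigma> \<rho> l k * C \<rho> \<pi>' k j) UNIV)
        = gsum csS (\<lambda>\<rho>. \<Sum>l=1..n. \<Sum>k=1..n. F \<rho> \<sigma> k l) UNIV" .
  qed
  have "gsum csS (\<lambda>\<rho>. gsum csS (\<lambda>\<sigma>. \<Sum>k=1..n. \<Sum>l=1..n. F \<rho> \<sigma> k l) UNIV) UNIV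
      = gsum csS (\<lambda>\<sigma>. gsum csS (\<lambda>\<rho>. \<Sum>k=1..n. \<Sum>l=1..n. F \<rho> \<sigma> k l) UNIV) UNIV"
    by (rule S.gsum_swap[OF tgL tgL])
  also have "\<dots> = gsum csS (\<lambda>\<sigma>. gsum csS (\<lambda>\<rho>. \<Sum>l=1..n. \<Sum>k=1..n. F \<rho> \<sigma> k l) UNIV) UNIV"
    by (subst sum.swap) (rule refl)
  finally show ?thesis using L R by simp
qed

lemma mp0: "mp 0 \<pi> \<pi>' i j = (if \<pi> = \<pi>' \<and> i = j then 1 else 0)" by simp

lemma bm_E_left: assumes "i \<in> {1..n}" shows "bm (mp 0) B \<pi> \<pi>' i j = B \<pi> \<pi>' i j"
proof -
  have "bm (mp 0) B \<pi> \<pi>' i j = gsum csS (\<lambda>\<rho>. if \<rho> = \<pi> then B \<pi> \<pi>' i j else 0) UNIV"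
    unfolding blockmul_def
  proof (rule S.gsum_cong[OF tgL])
    fix \<rho> show "(\<Sum>k = 1..n. mp 0 \<pi> \<rho> i k * B \<rho> \<pi>' k j) = (if \<rho> = \<pi> then B \<pi> \<pi>' i j else 0)"
      using assms by (cases "\<rho> = \<pi>") (simp_all add: if_mult1 sum.delta)
  qed
  also have "\<dots> = gsum csS (\<lambda>\<rho>. if \<rho> = \<pi> then B \<pi> \<pi>' i j else 0) {\<pi>}"
    by (rule S.gsum_mono_zero[OF tgL]) auto
  also have "\<dots> = B \<pi> \<pi>' i j" by (simp add: S.gsum_single[OF tgL])
  finally show ?thesis .
qed

lemma bm_E_right: assumes "j \<in> {1..n}" shows "bm A (mp 0) \<pi> \<pi>' i j = A \<pi> \<pi>' i j"
proof -
  have "bm A (mp 0) \<pi> \<pi>' i j = gsum csS (\<lambda>\<rho>. if \<rho> = \<pi>' then A \<pi> \<pi>' i j else 0) UNIV"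
    unfolding blockmul_def
  proof (rule S.gsum_cong[OF tgL])
    fix \<rho> show "(\<Sum>k = 1..n. A \<pi> \<rho> i k * mp 0 \<rho> \<pi>' k j) = (if \<rho> = \<pi>' then A \<pi> \<pi>' i j else 0)"
      using assms by (cases "\<rho> = \<pi>'") (simp_all add: if_mult2 sum.delta')
  qed
  also have "\<dots> = gsum csS (\<lambda>\<rho>. if \<rho> = \<pi>' then A \<pi> \<pi>' i j else 0) {\<pi>'}"
    by (rule S.gsum_mono_zero[OF tgL]) auto
  also have "\<dots> = A \<pi> \<pi>' i j" by (simp add: S.gsum_single[OF tgL])
  finally show ?thesis .
qed

lemma bm_cong: fixes A A' B B' :: "'g list \<Rightarrow> 'g list \<Rightarrow> nat \<Rightarrow> nat \<Rightarrow> 's"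
  shows "(\<And>\<rho> k. k \<in> {1..n} \<Longrightarrow> A \<pi> \<rho> i k = A' \<pi> \<rho> i k) \<Longrightarrow>
   (\<And>\<rho> k. k \<in> {1..n} \<Longrightarrow> B \<rho> \<pi>' k j = B' \<rho> \<pi>' k j) \<Longrightarrow>
   bm A B \<pi> \<pi>' i j = bm A' B' \<pi> \<pi>' i j"
  unfolding blockmul_def by (intro S.gsum_cong[OF tgL] sum.cong) auto

lemma mpL: "i \<in> {1..n} \<Longrightarrow> j \<in> {1..n} \<Longrightarrow> mp (Suc m) \<pi> \<pi>' i j = bm M (mp m) \<pi> \<pi>' i j"
proof (induction m arbitrary: \<pi> \<pi>' i j)
  case 0
  have "mp (Suc 0) \<pi> \<pi>' i j = bm (mp 0) M \<pi> \<pi>' i j" by simp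
  also have "\<dots> = M \<pi> \<pi>' i j" by (rule bm_E_left[OF 0(1)])
  also have "\<dots> = bm M (mp 0) \<pi> \<pi>' i j" by (rule bm_E_right[OF 0(2), symmetric])
  finally show ?case .
next
  case (Suc m)
  have "mp (Suc (Suc m)) \<pi> \<pi>' i j = bm (mp (Suc m)) M \<pi> \<pi>' i j" by simp
  also have "\<dots> = bm (bm M (mp m)) M \<pi> \<pi>' i j"
    by (rule bm_cong) (simp_all add: Suc.IH[OF Suc.prems(1)] del: mpow.simps)
  also have "\<dots> = bm M (bm (mp m) M) \<pi> \<pi>' i j" by (rule bm_assoc)
  also have "\<dots> = bm M (mp (Suc m)) \<pi> \<pi>' i j" by simp
  finally show ?case .
qed

lemma mpL': "i \<in> {1..n} \<Longrightarrow> j \<in> {1..n} \<Longrightarrow>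
  mp (Suc m) \<pi> \<pi>' i j = gsum csS (\<lambda>c. \<Sum>k=1..n. M \<pi> c i k * mp m c \<pi>' k j) UNIV"
  using mpL unfolding blockmul_def by simp

lemma MP0: "i \<in> {1..n} \<Longrightarrow> j \<in> {1..n} \<Longrightarrow> m \<ge> 1 \<Longrightarrow> mp m [] c i j = 0"
proof -
  assume a: "i \<in> {1..n}" "j \<in> {1..n}" "m \<ge> 1"
  then obtain m' where m: "m = Suc m'" by (cases m) auto
  show ?thesis unfolding m mpL'[OF a(1,2)]
    by (rule S.gsum_zero[OF _ tgL]) (simp add: PD1[OF a(1)])
qed

lemma RX: assumes i: "i \<in> {1..n}"
  shows "gsum csS (\<lambda>c. \<Sum>k=1..n. M (q # \<rho>) c i k * F c k) UNIV
       = gsum csS (\<lambda>\<tau>. \<Sum>k=1..n. M [q] \<tau> i k * F (\<tau> @ \<rho>) k) UNIV"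
proof -
  have "gsum csS (\<lambda>c. \<Sum>k=1..n. M (q # \<rho>) c i k * F c k) UNIV
      = gsum csS (\<lambda>c. \<Sum>k=1..n. M (q # \<rho>) c i k * F c k) (range (\<lambda>\<tau>. \<tau> @ \<rho>))"
  proof (rule S.gsum_mono_zero[OF tgL])
    fix c assume "c \<in> UNIV - range (\<lambda>\<tau>. \<tau> @ \<rho>)"
    then have nt: "\<nexists>\<tau>. c = \<tau> @ \<rho>" by auto
    show "(\<Sum>k=1..n. M (q # \<rho>) c i k * F c k) = 0"
      using PD3[OF i _ nt] by simp
  qed auto
  also have "\<dots> = gsum csS (\<lambda>\<tau>. \<Sum>k=1..n. M (q # \<rho>) (\<tau> @ \<rho>) i k * F (\<tau> @ \<rho>) k) UNIV"
    by (rule S.gsum_reindex[OF tgL tgL]) (simp add: inj_on_def)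
  also have "\<dots> = gsum csS (\<lambda>\<tau>. \<Sum>k=1..n. M [q] \<tau> i k * F (\<tau> @ \<rho>) k) UNIV"
    by (intro S.gsum_cong[OF tgL] sum.cong) (auto simp: PD4[OF i])
  finally show ?thesis .
qed

end


lemma sum3_swap: "(\<Sum>k\<in>A. \<Sum>m\<in>B. \<Sum>l\<in>C. f k m l) = (\<Sum>m\<in>B. \<Sum>l\<in>C. \<Sum>k\<in>A. (f k m l :: 'a::comm_monoid_add))"
proof -
  have "(\<Sum>k\<in>A. \<Sum>m\<in>B. \<Sum>l\<in>C. f k m l) = (\<Sum>m\<in>B. \<Sum>k\<in>A. \<Sum>l\<in>C. f k m l)" by (rule sum.swap)
  also have "\<dots> = (\<Sum>m\<in>B. \<Sum>l\<in>C. \<Sum>k\<in>A. f k m l)" by (rule sum.cong[OF refl], rule sum.swap)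
  finally show ?thesis .
qed

lemma bij_cauchy: "bij_betw (\<lambda>(a::nat,b). (a+b, a)) (UNIV \<times> UNIV) (Sigma UNIV (\<lambda>m. {..m}))"
proof (rule bij_betwI')
  fix x y :: "nat \<times> nat" show "((\<lambda>(a,b). (a+b, a)) x = (\<lambda>(a,b). (a+b, a)) y) = (x = y)"
    by (cases x; cases y) auto
next
  fix x :: "nat \<times> nat" show "(\<lambda>(a,b). (a+b, a)) x \<in> Sigma UNIV (\<lambda>m. {..m})" by (cases x) auto
next
  fix y assume "y \<in> Sigma UNIV (\<lambda>m::nat. {..m})"
  then obtain m m1 where "y = (m, m1)" "m1 \<le> m" by auto
  then show "\<exists>x\<in>UNIV \<times> UNIV. y = (\<lambda>(a,b). (a+b, a)) x" by (intro bexI[of _ "(m1, m - m1)"]) auto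
qed

context pda begin

lemma Cnil: assumes i: "i \<in> {1..n}" and j: "j \<in> {1..n}"
  shows "mp m \<pi>' [] i j = (\<Sum>m1\<le>m. \<Sum>k=1..n. mp m1 [] [] i k * mp (m - m1) \<pi>' [] k j)"
proof -
  have "(\<Sum>m1\<le>m. \<Sum>k=1..n. mp m1 [] [] i k * mp (m - m1) \<pi>' [] k j)
      = (\<Sum>m1\<in>{0}. \<Sum>k=1..n. mp m1 [] [] i k * mp (m - m1) \<pi>' [] k j)"
  proof (rule sum.mono_neutral_right)
    show "\<forall>m1\<in>{..m} - {0}. (\<Sum>k=1..n. mp m1 [] [] i k * mp (m - m1) \<pi>' [] k j) = 0"
    proof
      fix m1 assume "m1 \<in> {..m} - {0}"
      then have "m1 \<ge> 1" by auto
      then show "(\<Sum>k=1..n. mp m1 [] [] i k * mp (m - m1) \<pi>' [] k j) = 0"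
        by (intro sum.neutral ballI) (simp add: MP0[OF i])
    qed
  qed auto
  also have "\<dots> = mp m \<pi>' [] i j" using i by (simp add: if_mult1 sum.delta del: mpow.simps(2))
  finally show ?thesis by simp
qed

lemma Cgen: "i \<in> {1..n} \<Longrightarrow> j \<in> {1..n} \<Longrightarrow>
  mp m (\<rho> @ \<pi>') [] i j = (\<Sum>m1\<le>m. \<Sum>k=1..n. mp m1 \<rho> [] i k * mp (m - m1) \<pi>' [] k j)"
proof (induction m arbitrary: \<rho> i j)
  case 0
  show ?case
  proof (cases \<rho>)
    case Nil then show ?thesis by (simp only: append_Nil) (rule Cnil[OF 0(1,2)])
  next
    case (Cons q \<rho>') then show ?thesis by simp
  qed
next
  case (Suc m)
  note i = Suc.prems(1) and j = Suc.prems(2)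
  show ?case
  proof (cases \<rho>)
    case Nil then show ?thesis by (simp only: append_Nil) (rule Cnil[OF i j])
  next
    case (Cons q \<rho>')
    define G where "G \<tau> m1 k' k = M [q] \<tau> i k * mp m1 (\<tau> @ \<rho>') [] k k' * mp (m - m1) \<pi>' [] k' j" for \<tau> m1 k' k
    have "mp (Suc m) (\<rho> @ \<pi>') [] i j = gsum csS (\<lambda>c. \<Sum>k=1..n. M (q # (\<rho>' @ \<pi>')) c i k * mp m c [] k j) UNIV"
      using mpL'[OF i j] Cons by simp
    also have "\<dots> = gsum csS (\<lambda>\<tau>. \<Sum>k=1..n. M [q] \<tau> i k * mp m (\<tau> @ (\<rho>' @ \<pi>')) [] k j) UNIV"
      by (rule RX[OF i])
    also have "\<dots> = gsum csS (\<lambda>\<tau>. \<Sum>k=1..n. M [q] \<tau> i k *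
          (\<Sum>m1\<le>m. \<Sum>k'=1..n. mp m1 (\<tau> @ \<rho>') [] k k' * mp (m - m1) \<pi>' [] k' j)) UNIV"
    proof (intro S.gsum_cong[OF tgL] sum.cong refl)
      fix \<tau> k assume k: "k \<in> {1..n}"
      show "M [q] \<tau> i k * mp m (\<tau> @ (\<rho>' @ \<pi>')) [] k j = M [q] \<tau> i k *
          (\<Sum>m1\<le>m. \<Sum>k'=1..n. mp m1 (\<tau> @ \<rho>') [] k k' * mp (m - m1) \<pi>' [] k' j)"
        using Suc.IH[OF k j, of "\<tau> @ \<rho>'"] by simp
    qed
    also have "\<dots> = gsum csS (\<lambda>\<tau>. \<Sum>m1\<le>m. \<Sum>k'=1..n. \<Sum>k=1..n. G \<tau> m1 k' k) UNIV"
    proof (rule S.gsum_cong[OF tgL])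
      fix \<tau>
      have "(\<Sum>k=1..n. M [q] \<tau> i k * (\<Sum>m1\<le>m. \<Sum>k'=1..n. mp m1 (\<tau> @ \<rho>') [] k k' * mp (m - m1) \<pi>' [] k' j))
          = (\<Sum>k=1..n. \<Sum>m1\<le>m. \<Sum>k'=1..n. G \<tau> m1 k' k)"
        by (simp add: sum_distrib_left G_def mult.assoc)
      also have "\<dots> = (\<Sum>m1\<le>m. \<Sum>k'=1..n. \<Sum>k=1..n. G \<tau> m1 k' k)" by (rule sum3_swap)
      finally show "(\<Sum>k=1..n. M [q] \<tau> i k * (\<Sum>m1\<le>m. \<Sum>k'=1..n. mp m1 (\<tau> @ \<rho>') [] k k' * mp (m - m1) \<pi>' [] k' j))
          = (\<Sum>m1\<le>m. \<Sum>k'=1..n. \<Sum>k=1..n. G \<tau> m1 k' k)" .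
    qed
    also have "\<dots> = (\<Sum>m1\<le>m. \<Sum>k'=1..n. gsum csS (\<lambda>\<tau>. \<Sum>k=1..n. G \<tau> m1 k' k) UNIV)"
      by (simp add: S.gsum_sum[OF tgL])
    also have "\<dots> = (\<Sum>m1\<le>m. \<Sum>k'=1..n. mp (Suc m1) \<rho> [] i k' * mp (Suc m - Suc m1) \<pi>' [] k' j)"
    proof (intro sum.cong refl)
      fix m1 k' assume k': "k' \<in> {1..n}"
      have "mp (Suc m1) \<rho> [] i k' = gsum csS (\<lambda>c. \<Sum>k=1..n. M (q # \<rho>') c i k * mp m1 c [] k k') UNIV"
        using mpL'[OF i k'] Cons by simp
      also have "\<dots> = gsum csS (\<lambda>\<tau>. \<Sum>k=1..n. M [q] \<tau> i k * mp m1 (\<tau> @ \<rho>') [] k k') UNIV"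
        by (rule RX[OF i])
      finally have e: "mp (Suc m1) \<rho> [] i k' = gsum csS (\<lambda>\<tau>. \<Sum>k=1..n. M [q] \<tau> i k * mp m1 (\<tau> @ \<rho>') [] k k') UNIV" .
      show "gsum csS (\<lambda>\<tau>. \<Sum>k=1..n. G \<tau> m1 k' k) UNIV = mp (Suc m1) \<rho> [] i k' * mp (Suc m - Suc m1) \<pi>' [] k' j"
        unfolding e by (simp add: S_rmult[OF tgL] sum_distrib_right G_def)
    qed
    also have "\<dots> = (\<Sum>m1\<le>Suc m. \<Sum>k'=1..n. mp m1 \<rho> [] i k' * mp (Suc m - m1) \<pi>' [] k' j)"
      by (subst sum.atMost_Suc_shift) (simp add: Cons)
    finally show ?thesis .
  qed
qed

lemma cauchy: fixes g :: "nat \<Rightarrow> nat \<Rightarrow> 's" shows "gsum csS (\<lambda>m. \<Sum>m1\<le>m. g m1 (m - m1)) UNIV = gsum csS (\<lambda>a. gsum csS (\<lambda>b. g a b) UNIV) UNIV"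
proof -
  have "gsum csS (\<lambda>m. \<Sum>m1\<le>m. g m1 (m - m1)) UNIV = gsum csS (\<lambda>m. gsum csS (\<lambda>m1. g m1 (m - m1)) {..m}) UNIV"
    by (rule S.gsum_cong[OF tg_nat]) (simp add: S.gsum_finite[OF tg_nat])
  also have "\<dots> = gsum csS (\<lambda>(m, m1). g m1 (m - m1)) (Sigma UNIV (\<lambda>m. {..m}))"
    using S.gsum_Sigma[OF tg_nat tg_nat, of "\<lambda>(m, m1). g m1 (m - m1)" UNIV "\<lambda>m. {..m}"] by simp
  also have "\<dots> = gsum csS (\<lambda>x. (\<lambda>(m, m1). g m1 (m - m1)) ((\<lambda>(a,b). (a+b, a)) x)) (UNIV \<times> UNIV)"
    by (rule S.gsum_bij[OF tg_prod[OF tg_nat tg_nat] tg_prod[OF tg_nat tg_nat] bij_cauchy])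
  also have "\<dots> = gsum csS (\<lambda>(a,b). g a b) (UNIV \<times> UNIV)"
    by (rule S.gsum_cong[OF tg_prod[OF tg_nat tg_nat]]) auto
  also have "\<dots> = gsum csS (\<lambda>a. gsum csS (\<lambda>b. g a b) UNIV) UNIV"
    using S.gsum_Sigma[OF tg_nat tg_nat, of "\<lambda>(a,b). g a b" UNIV "\<lambda>_. UNIV"] by simp
  finally show ?thesis .
qed

lemma XC: assumes i: "i \<in> {1..n}" and j: "j \<in> {1..n}"
  shows "mstar csS n M (\<rho> @ \<pi>') [] i j = (\<Sum>k=1..n. mstar csS n M \<rho> [] i k * mstar csS n M \<pi>' [] k j)"
proof -
  have "mstar csS n M (\<rho> @ \<pi>') [] i j = gsum csS (\<lambda>m. \<Sum>m1\<le>m. \<Sum>k=1..n. mp m1 \<rho> [] i k * mp (m - m1) \<pi>' [] k j) UNIV"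
    unfolding mstar_def by (rule S.gsum_cong[OF tg_nat]) (rule Cgen[OF i j])
  also have "\<dots> = gsum csS (\<lambda>m. \<Sum>k=1..n. \<Sum>m1\<le>m. mp m1 \<rho> [] i k * mp (m - m1) \<pi>' [] k j) UNIV"
    by (rule S.gsum_cong[OF tg_nat]) (rule sum.swap)
  also have "\<dots> = (\<Sum>k=1..n. gsum csS (\<lambda>m. \<Sum>m1\<le>m. mp m1 \<rho> [] i k * mp (m - m1) \<pi>' [] k j) UNIV)"
    by (simp add: S.gsum_sum[OF tg_nat])
  also have "\<dots> = (\<Sum>k=1..n. mstar csS n M \<rho> [] i k * mstar csS n M \<pi>' [] k j)"
  proof (rule sum.cong[OF refl])
    fix k
    have "gsum csS (\<lambda>m. \<Sum>m1\<le>m. mp m1 \<rho> [] i k * mp (m - m1) \<pi>' [] k j) UNIV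
        = gsum csS (\<lambda>a. gsum csS (\<lambda>b. mp a \<rho> [] i k * mp b \<pi>' [] k j) UNIV) UNIV"
      by (rule cauchy)
    also have "\<dots> = gsum csS (\<lambda>(a,b). mp a \<rho> [] i k * mp b \<pi>' [] k j) (UNIV \<times> UNIV)"
      using S.gsum_Sigma[OF tg_nat tg_nat, of "\<lambda>(a,b). mp a \<rho> [] i k * mp b \<pi>' [] k j" UNIV "\<lambda>_. UNIV"] by simp
    also have "\<dots> = mstar csS n M \<rho> [] i k * mstar csS n M \<pi>' [] k j"
      unfolding mstar_def by (rule S_mult[OF tg_nat tg_nat, symmetric])
    finally show "gsum csS (\<lambda>m. \<Sum>m1\<le>m. mp m1 \<rho> [] i k * mp (m - m1) \<pi>' [] k j) UNIV
        = mstar csS n M \<rho> [] i k * mstar csS n M \<pi>' [] k j" .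
  qed
  finally show ?thesis .
qed

lemma Xnil: assumes i: "i \<in> {1..n}" and j: "j \<in> {1..n}"
  shows "mstar csS n M [] [] i j = (if i = j then 1 else 0)"
proof -
  have "mstar csS n M [] [] i j = gsum csS (\<lambda>m. mp m [] [] i j) {0}"
    unfolding mstar_def
  proof (rule S.gsum_mono_zero[OF tg_nat])
    fix m assume "m \<in> UNIV - {0::nat}"
    then show "mp m [] [] i j = 0" using MP0[OF i j] by (simp del: mpow.simps)
  qed auto
  then show ?thesis by (simp add: S.gsum_single[OF tg_nat])
qed

lemma Xword: "i \<in> {1..n} \<Longrightarrow> j \<in> {1..n} \<Longrightarrow>
  mstar csS n M \<pi> [] i j = word_mat n (\<lambda>p. mstar csS n M [p] []) \<pi> i j"
proof (induction \<pi> arbitrary: i j)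
  case Nil then show ?case by (simp add: Xnil word_mat_def idm_def)
next
  case (Cons q \<pi>)
  have "mstar csS n M (q # \<pi>) [] i j = mstar csS n M ([q] @ \<pi>) [] i j" by simp
  also have "\<dots> = (\<Sum>k=1..n. mstar csS n M [q] [] i k * mstar csS n M \<pi> [] k j)"
    by (rule XC[OF Cons.prems])
  also have "\<dots> = (\<Sum>k=1..n. mstar csS n M [q] [] i k * word_mat n (\<lambda>p. mstar csS n M [p] []) \<pi> k j)"
  proof (rule sum.cong[OF refl])
    fix k assume "k \<in> {1..n}"
    then show "mstar csS n M [q] [] i k * mstar csS n M \<pi> [] k j = mstar csS n M [q] [] i k * word_mat n (\<lambda>p. mstar csS n M [p] []) \<pi> k j"
      using Cons.IH[OF _ Cons.prems(2)] by simp
  qed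
  also have "\<dots> = word_mat n (\<lambda>p. mstar csS n M [p] []) (q # \<pi>) i j"
    by (simp add: word_mat_def mm_def)
  finally show ?case .
qed

lemma conj1: assumes i: "i \<in> {1..n}" and j: "j \<in> {1..n}"
  shows "mstar csS n M [p] [] i j = gsum csS (\<lambda>\<pi>. mm n (M [p] \<pi>) (word_mat n (\<lambda>p. mstar csS n M [p] []) \<pi>) i j) UNIV"
proof -
  have "mstar csS n M [p] [] i j = gsum csS (\<lambda>m. mp m [p] [] i j) (range Suc)"
    unfolding mstar_def
  proof (rule S.gsum_mono_zero[OF tg_nat])
    fix m assume "m \<in> UNIV - range Suc"
    then have "m = 0" by (cases m) auto
    then show "mp m [p] [] i j = 0" by simp
  qed auto
  also have "\<dots> = gsum csS (\<lambda>m. mp (Suc m) [p] [] i j) UNIV"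
    by (rule S.gsum_reindex[OF tg_nat tg_nat]) simp
  also have "\<dots> = gsum csS (\<lambda>m. gsum csS (\<lambda>\<pi>. \<Sum>k=1..n. M [p] \<pi> i k * mp m \<pi> [] k j) UNIV) UNIV"
    by (rule S.gsum_cong[OF tg_nat]) (rule mpL'[OF i j])
  also have "\<dots> = gsum csS (\<lambda>\<pi>. gsum csS (\<lambda>m. \<Sum>k=1..n. M [p] \<pi> i k * mp m \<pi> [] k j) UNIV) UNIV"
    by (rule S.gsum_swap[OF tg_nat tgL])
  also have "\<dots> = gsum csS (\<lambda>\<pi>. mm n (M [p] \<pi>) (word_mat n (\<lambda>p. mstar csS n M [p] []) \<pi>) i j) UNIV"
  proof (rule S.gsum_cong[OF tgL])
    fix \<pi>
    have "gsum csS (\<lambda>m. \<Sum>k=1..n. M [p] \<pi> i k * mp m \<pi> [] k j) UNIV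
        = (\<Sum>k=1..n. M [p] \<pi> i k * mstar csS n M \<pi> [] k j)"
      by (simp add: S.gsum_sum[OF tg_nat] S_lmult[OF tg_nat] mstar_def)
    also have "\<dots> = mm n (M [p] \<pi>) (word_mat n (\<lambda>p. mstar csS n M [p] []) \<pi>) i j"
      unfolding mm_def
    proof (rule sum.cong[OF refl])
      fix k assume "k \<in> {1..n}"
      then show "M [p] \<pi> i k * mstar csS n M \<pi> [] k j = M [p] \<pi> i k * word_mat n (\<lambda>p. mstar csS n M [p] []) \<pi> k j"
        using Xword[OF _ j] by simp
    qed
    finally show "gsum csS (\<lambda>m. \<Sum>k=1..n. M [p] \<pi> i k * mp m \<pi> [] k j) UNIV
        = mm n (M [p] \<pi>) (word_mat n (\<lambda>p. mstar csS n M [p] []) \<pi>) i j" .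
  qed
  finally show ?thesis .
qed

end


lemma inf_shift: "infinite {t. P (t + m)} \<longleftrightarrow> infinite {t::nat. P t}"
proof
  assume inf: "infinite {t. P (t + m)}"
  show "infinite {t. P t}"
  proof
    assume f: "finite {t. P t}"
    have "{t. P (t + m)} = (\<lambda>t. t + m) -` {t. P t}" by auto
    then have "finite {t. P (t + m)}" using finite_vimageI[OF f, of "\<lambda>t. t + m"] by (simp add: inj_on_def)
    then show False using inf by simp
  qed
next
  assume inf: "infinite {t. P t}"
  show "infinite {t. P (t + m)}"
  proof
    assume f: "finite {t. P (t + m)}"
    have "{t. P t} \<subseteq> {..<m} \<union> (\<lambda>t. t + m) ` {t. P (t + m)}"
    proof
      fix t assume "t \<in> {t. P t}"
      then show "t \<in> {..<m} \<union> (\<lambda>t. t + m) ` {t. P (t + m)}"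
        by (cases "t < m") (auto intro!: image_eqI[of _ _ "t - m"])
    qed
    moreover have "finite ({..<m} \<union> (\<lambda>t. t + m) ` {t. P (t + m)})" using f by simp
    ultimately show False using inf finite_subset by blast
  qed
qed

definition cat :: "nat \<Rightarrow> 'a list \<Rightarrow> (nat \<Rightarrow> 'a) \<Rightarrow> nat \<Rightarrow> 'a" where
  "cat m cs ps = (\<lambda>t. if t < m then cs ! t else ps (t - m))"

lemma cat_shift[simp]: "cat m cs ps (t + m) = ps t" by (simp add: cat_def)

lemma cat_prefix[simp]: "length cs = m \<Longrightarrow> map (cat m cs ps) [0..<m] = cs"
  by (rule nth_equalityI) (auto simp: cat_def)

lemma cat_split[simp]: "cat m (map ps [0..<m]) (\<lambda>t. ps (t + m)) = ps"
  by (rule ext) (auto simp: cat_def)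

definition lst :: "'a \<Rightarrow> 'a list \<Rightarrow> 'a" where "lst x xs = (if xs = [] then x else last xs)"

lemma Pl_cat: "length ks = m \<Longrightarrow> cat m ks js' \<in> Pl n l \<longleftrightarrow> set ks \<subseteq> {1..n} \<and> js' \<in> Pl n l"
proof -
  assume len: "length ks = m"
  have a: "(\<forall>t. cat m ks js' t \<in> {1..n}) \<longleftrightarrow> set ks \<subseteq> {1..n} \<and> (\<forall>t. js' t \<in> {1..n})"
  proof
    assume h: "\<forall>t. cat m ks js' t \<in> {1..n}"
    have "set ks \<subseteq> {1..n}"
    proof
      fix x assume "x \<in> set ks"
      then obtain t where "t < m" "ks ! t = x" using len by (auto simp: in_set_conv_nth)
      then show "x \<in> {1..n}" using h[rule_format, of t] by (simp add: cat_def)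
    qed
    moreover have "\<forall>t. js' t \<in> {1..n}" using h cat_shift by metis
    ultimately show "set ks \<subseteq> {1..n} \<and> (\<forall>t. js' t \<in> {1..n})" by blast
  next
    assume h: "set ks \<subseteq> {1..n} \<and> (\<forall>t. js' t \<in> {1..n})"
    show "\<forall>t. cat m ks js' t \<in> {1..n}"
    proof
      fix t show "cat m ks js' t \<in> {1..n}"
      proof (cases "t < m")
        case True then have "ks ! t \<in> set ks" using len by simp
        then show ?thesis using h True by (auto simp: cat_def)
      next
        case False then show ?thesis using h by (simp add: cat_def)
      qed
    qed
  qed
  have b: "infinite {t. cat m ks js' t \<le> l} \<longleftrightarrow> infinite {t. js' t \<le> l}"
    using inf_shift[of "\<lambda>t. cat m ks js' t \<le> l" m] by simp
  show ?thesis unfolding Pl_def using a b by blast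
qed

lemma Pl_shift: "js \<in> Pl n l \<Longrightarrow> (\<lambda>t. js (t + m)) \<in> Pl n l"
  unfolding Pl_def using inf_shift[of "\<lambda>t. js t \<le> l" m] by auto

context pda begin

definition W :: "'g list \<Rightarrow> nat \<Rightarrow> (nat \<Rightarrow> 'g list) \<Rightarrow> (nat \<Rightarrow> nat) \<Rightarrow> nat \<Rightarrow> 's" where
  "W \<pi> i ps js = (\<lambda>t. M (if t = 0 then \<pi> else ps (t - 1)) (ps t) (if t = 0 then i else js (t - 1)) (js t))"

definition pwl :: "'g list \<Rightarrow> nat \<Rightarrow> 'g list list \<Rightarrow> nat list \<Rightarrow> 's" where
  "pwl \<pi> i cs ks = prod_list (map (\<lambda>t. M (if t = 0 then \<pi> else cs ! (t - 1)) (cs ! t)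
      (if t = 0 then i else ks ! (t - 1)) (ks ! t)) [0..<length cs])"

definition Pm :: "nat \<Rightarrow> ('g list list \<times> nat list) set" where
  "Pm m = {(cs, ks). length cs = m \<and> length ks = m \<and> set ks \<subseteq> {1..n}}"

abbreviation Om where "Om l \<pi> i \<equiv> momega csV ip n l M \<pi> i"

lemma tgPS: "tg TYPE(nat \<Rightarrow> 'g list)" by (rule tg_fun[OF tgL])
lemma tgJS: "tg TYPE(nat \<Rightarrow> nat)" by (rule tg_tag)
lemma tgU: "tg TYPE((nat \<Rightarrow> 'g list) \<times> (nat \<Rightarrow> nat))" by (rule tg_prod[OF tgPS tgJS])
lemma tgP: "tg TYPE('g list list \<times> nat list)" by (rule tg_countable)

lemma Om_prod: "Om l \<pi> i = gsum csV (\<lambda>(ps, js). ip (W \<pi> i ps js)) (UNIV \<times> Pl n l)"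
proof -
  have "gsum csV (\<lambda>(ps, js). ip (W \<pi> i ps js)) (UNIV \<times> Pl n l) = gsum csV (\<lambda>ps. gsum csV (\<lambda>js. ip (W \<pi> i ps js)) (Pl n l)) UNIV"
    using V.gsum_Sigma[OF tgPS tgJS, of "\<lambda>(ps, js). ip (W \<pi> i ps js)" UNIV "\<lambda>_. Pl n l"] by simp
  then show ?thesis by (simp add: momega_def W_def)
qed

lemma WL: assumes "length cs = m" "length ks = m"
  shows "ip (W \<pi> i (cat m cs ps') (cat m ks js')) = sm (pwl \<pi> i cs ks) (ip (W (lst \<pi> cs) (lst i ks) ps' js'))"
proof -
  have p: "prod_list (map (W \<pi> i (cat m cs ps') (cat m ks js')) [0..<m]) = pwl \<pi> i cs ks"
    unfolding pwl_def using assms by (intro arg_cong[where f=prod_list] map_cong) (auto simp: W_def cat_def)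
  have s: "(\<lambda>t. W \<pi> i (cat m cs ps') (cat m ks js') (t + m)) = W (lst \<pi> cs) (lst i ks) ps' js'"
  proof
    fix t
    show "W \<pi> i (cat m cs ps') (cat m ks js') (t + m) = W (lst \<pi> cs) (lst i ks) ps' js' t"
    proof (cases "m = 0")
      case True then show ?thesis using assms by (simp add: W_def cat_def lst_def)
    next
      case False
      then have ne: "cs \<noteq> []" "ks \<noteq> []" using assms by auto
      show ?thesis
      proof (cases t)
        case 0 then show ?thesis using assms ne False
          by (simp add: W_def cat_def lst_def last_conv_nth)
      next
        case (Suc t') then show ?thesis using assms ne False
          by (simp add: W_def cat_def lst_def)
      qed
    qed
  qed
  show ?thesis using ip_prefix[of "W \<pi> i (cat m cs ps') (cat m ks js')" m] p s by simp
qed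

lemma SPLIT:
  "gsum csV (\<lambda>(ps, js). ip (W \<pi> i ps js)) {(ps, js) \<in> UNIV \<times> Pl n l. (map ps [0..<m], map js [0..<m]) \<in> Q}
   = gsum csV (\<lambda>(cs, ks). sm (pwl \<pi> i cs ks) (Om l (lst \<pi> cs) (lst i ks))) (Pm m \<inter> Q)"
proof -
  let ?A = "{(ps, js) \<in> UNIV \<times> Pl n l. (map ps [0..<m], map js [0..<m]) \<in> Q}"
  let ?B = "Sigma (Pm m \<inter> Q) (\<lambda>_. UNIV \<times> Pl n l)"
  let ?G = "\<lambda>((cs, ks), (ps', js')). (cat m cs ps', cat m ks js')"
  let ?F = "\<lambda>(ps, js). ((map ps [0..<m], map js [0..<m]), ((\<lambda>t. ps (t + m)), (\<lambda>t. js (t + m))))"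
  have bij: "bij_betw ?G ?B ?A"
  proof (rule bij_betw_byWitness[where f' = ?F])
    show "\<forall>a\<in>?B. ?F (?G a) = a" by (auto simp: Pm_def)
    show "\<forall>a\<in>?A. ?G (?F a) = a" by auto
    show "?G ` ?B \<subseteq> ?A" by (auto simp: Pm_def Pl_cat)
    show "?F ` ?A \<subseteq> ?B"
    proof
      fix y assume "y \<in> ?F ` ?A"
      then obtain ps js where y: "y = ?F (ps, js)" and js: "js \<in> Pl n l" and q: "(map ps [0..<m], map js [0..<m]) \<in> Q"
        by auto
      have "set (map js [0..<m]) \<subseteq> {1..n}" using js by (auto simp: Pl_def)
      then show "y \<in> ?B" using y js q Pl_shift[OF js] by (auto simp: Pm_def)
    qed
  qed
  have "gsum csV (\<lambda>(ps, js). ip (W \<pi> i ps js)) ?A = gsum csV (\<lambda>x. (\<lambda>(ps, js). ip (W \<pi> i ps js)) (?G x)) ?B"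
    by (rule V.gsum_bij[OF tgU tg_prod[OF tgP tgU] bij])
  also have "\<dots> = gsum csV (\<lambda>((cs, ks), (ps', js')). sm (pwl \<pi> i cs ks) (ip (W (lst \<pi> cs) (lst i ks) ps' js'))) ?B"
    by (rule V.gsum_cong[OF tg_prod[OF tgP tgU]]) (auto simp: WL Pm_def)
  also have "\<dots> = gsum csV (\<lambda>(cs, ks). gsum csV (\<lambda>(ps', js'). sm (pwl \<pi> i cs ks) (ip (W (lst \<pi> cs) (lst i ks) ps' js'))) (UNIV \<times> Pl n l)) (Pm m \<inter> Q)"
    using V.gsum_Sigma[OF tgP tgU, of "\<lambda>((cs, ks), (ps', js')). sm (pwl \<pi> i cs ks) (ip (W (lst \<pi> cs) (lst i ks) ps' js'))" "Pm m \<inter> Q" "\<lambda>_. UNIV \<times> Pl n l"]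
    by (simp add: split_def)
  also have "\<dots> = gsum csV (\<lambda>(cs, ks). sm (pwl \<pi> i cs ks) (Om l (lst \<pi> cs) (lst i ks))) (Pm m \<inter> Q)"
    by (rule V.gsum_cong[OF tgP]) (auto simp: Om_prod sm_gsum split_def)
  finally show ?thesis .
qed

lemma Z1: "Om l \<pi> i = gsum csV (\<lambda>c. \<Sum>k=1..n. sm (M \<pi> c i k) (Om l c k)) UNIV"
proof -
  have "Om l \<pi> i = gsum csV (\<lambda>(ps, js). ip (W \<pi> i ps js)) {(ps, js) \<in> UNIV \<times> Pl n l. (map ps [0..<1], map js [0..<1]) \<in> UNIV}"
  proof -
    have e: "{(ps, js) \<in> UNIV \<times> Pl n l. (map ps [0..<1], map js [0..<1]) \<in> (UNIV::('g list list \<times> nat list) set)} = UNIV \<times> Pl n l"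
      by auto
    show ?thesis by (simp only: e Om_prod)
  qed
  also have "\<dots> = gsum csV (\<lambda>(cs, ks). sm (pwl \<pi> i cs ks) (Om l (lst \<pi> cs) (lst i ks))) (Pm 1 \<inter> UNIV)"
    by (rule SPLIT)
  also have "Pm 1 \<inter> UNIV = (\<lambda>(c, k). ([c], [k])) ` (UNIV \<times> {1..n})"
  proof
    show "Pm 1 \<inter> UNIV \<subseteq> (\<lambda>(c, k). ([c], [k])) ` (UNIV \<times> {1..n})"
    proof
      fix x assume "x \<in> Pm 1 \<inter> UNIV"
      then obtain cs ks where x: "x = (cs, ks)" "length cs = 1" "length ks = 1" "set ks \<subseteq> {1..n}"
        by (auto simp: Pm_def)
      then obtain c k where "cs = [c]" "ks = [k]" by (auto simp: length_Suc_conv)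
      then show "x \<in> (\<lambda>(c, k). ([c], [k])) ` (UNIV \<times> {1..n})" using x by auto
    qed
  qed (auto simp: Pm_def)
  also have "gsum csV (\<lambda>(cs, ks). sm (pwl \<pi> i cs ks) (Om l (lst \<pi> cs) (lst i ks))) ((\<lambda>(c, k). ([c], [k])) ` (UNIV \<times> {1..n}))
     = gsum csV (\<lambda>x. (\<lambda>(cs, ks). sm (pwl \<pi> i cs ks) (Om l (lst \<pi> cs) (lst i ks))) ((\<lambda>(c, k). ([c], [k])) x)) (UNIV \<times> {1..n})"
    by (rule V.gsum_reindex[OF tgP tg_prod[OF tgL tg_nat]]) (auto simp: inj_on_def)
  also have "\<dots> = gsum csV (\<lambda>(c, k). sm (M \<pi> c i k) (Om l c k)) (UNIV \<times> {1..n})"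
    by (rule V.gsum_cong[OF tg_prod[OF tgL tg_nat]]) (auto simp: pwl_def lst_def)
  also have "\<dots> = gsum csV (\<lambda>c. gsum csV (\<lambda>k. sm (M \<pi> c i k) (Om l c k)) {1..n}) UNIV"
    using V.gsum_Sigma[OF tgL tg_nat, of "\<lambda>(c, k). sm (M \<pi> c i k) (Om l c k)" UNIV "\<lambda>_. {1..n}"] by simp
  also have "\<dots> = gsum csV (\<lambda>c. \<Sum>k=1..n. sm (M \<pi> c i k) (Om l c k)) UNIV"
    by (rule V.gsum_cong[OF tgL]) (simp add: V.gsum_finite[OF tg_nat])
  finally show ?thesis .
qed

end


context pda begin

lemma ks_in: "set ks \<subseteq> {1..n} \<Longrightarrow> t < length ks \<Longrightarrow> ks ! t \<in> {1..n}"
  by (meson nth_mem subsetD)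

lemma pwl_cons: "pwl \<pi> i (c # cs) (k # ks) = M \<pi> c i k * pwl c k cs ks"
proof -
  have u: "[0..<length (c # cs)] = 0 # map Suc [0..<length cs]"
    by (simp add: upt_conv_Cons map_Suc_upt del: upt_Suc)
  show ?thesis unfolding pwl_def u by (simp add: comp_def nth_Cons')
qed

lemma pwl_zero: "t < length cs \<Longrightarrow>
   M (if t = 0 then \<pi> else cs ! (t - 1)) (cs ! t) (if t = 0 then i else ks ! (t - 1)) (ks ! t) = 0 \<Longrightarrow>
   pwl \<pi> i cs ks = 0"
  unfolding pwl_def by (rule prod_list_zero) force

lemma PATH: assumes i: "i \<in> {1..n}" and j: "j \<in> {1..n}"
  shows "mp (Suc m) \<pi> \<pi>' i j = gsum csS (\<lambda>(cs, ks). pwl \<pi> i cs ks) {(cs, ks) \<in> Pm (Suc m). last cs = \<pi>' \<and> last ks = j}"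
  using i
proof (induction m arbitrary: \<pi> i)
  case 0
  have "mp (Suc 0) \<pi> \<pi>' i j = M \<pi> \<pi>' i j" using bm_E_left[OF 0] by simp
  moreover have "{(cs, ks) \<in> Pm (Suc 0). last cs = \<pi>' \<and> last ks = j} = {([\<pi>'], [j])}"
    using j by (auto simp: Pm_def length_Suc_conv)
  ultimately show ?case by (simp add: S.gsum_single[OF tgP] pwl_def)
next
  case (Suc m)
  let ?S = "{(cs, ks) \<in> Pm (Suc m). last cs = \<pi>' \<and> last ks = j}"
  let ?S' = "{(cs, ks) \<in> Pm (Suc (Suc m)). last cs = \<pi>' \<and> last ks = j}"
  let ?h = "\<lambda>(c, k, cs, ks). (c # cs, k # ks)"
  let ?f = "\<lambda>(c, k, cs, ks). M \<pi> c i k * pwl c k cs ks"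
  have tD: "tg TYPE('g list \<times> nat \<times> 'g list list \<times> nat list)"
    by (rule tg_prod[OF tgL tg_prod[OF tg_nat tgP]])
  have "mp (Suc (Suc m)) \<pi> \<pi>' i j = gsum csS (\<lambda>c. \<Sum>k=1..n. M \<pi> c i k * mp (Suc m) c \<pi>' k j) UNIV"
    by (rule mpL'[OF Suc.prems j])
  also have "\<dots> = gsum csS (\<lambda>c. gsum csS (\<lambda>k. gsum csS (\<lambda>x. ?f (c, k, x)) ?S) {1..n}) UNIV"
  proof (rule S.gsum_cong[OF tgL])
    fix c
    show "(\<Sum>k=1..n. M \<pi> c i k * mp (Suc m) c \<pi>' k j) = gsum csS (\<lambda>k. gsum csS (\<lambda>x. ?f (c, k, x)) ?S) {1..n}"
      unfolding S.gsum_finite[OF tg_nat finite_atLeastAtMost]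
    proof (rule sum.cong[OF refl])
      fix k assume k: "k \<in> {1..n}"
      show "M \<pi> c i k * mp (Suc m) c \<pi>' k j = gsum csS (\<lambda>x. ?f (c, k, x)) ?S"
        unfolding Suc.IH[OF k] S_lmult[OF tgP] by (rule S.gsum_cong[OF tgP]) auto
    qed
  qed
  also have "\<dots> = gsum csS ?f (UNIV \<times> ({1..n} \<times> ?S))"
  proof -
    have "gsum csS ?f (UNIV \<times> ({1..n} \<times> ?S)) = gsum csS (\<lambda>c. gsum csS (\<lambda>y. ?f (c, y)) ({1..n} \<times> ?S)) UNIV"
      by (rule S.gsum_Sigma[OF tgL tg_prod[OF tg_nat tgP]])
    also have "\<dots> = gsum csS (\<lambda>c. gsum csS (\<lambda>k. gsum csS (\<lambda>x. ?f (c, k, x)) ?S) {1..n}) UNIV"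
      by (rule S.gsum_cong[OF tgL]) (rule S.gsum_Sigma[OF tg_nat tgP])
    finally show ?thesis by simp
  qed
  also have "\<dots> = gsum csS (\<lambda>x. (\<lambda>(cs, ks). pwl \<pi> i cs ks) (?h x)) (UNIV \<times> ({1..n} \<times> ?S))"
    by (rule S.gsum_cong[OF tD]) (auto simp: pwl_cons)
  also have "\<dots> = gsum csS (\<lambda>(cs, ks). pwl \<pi> i cs ks) (?h ` (UNIV \<times> ({1..n} \<times> ?S)))"
    by (rule S.gsum_reindex[OF tgP tD, symmetric]) (auto simp: inj_on_def)
  also have "?h ` (UNIV \<times> ({1..n} \<times> ?S)) = ?S'"
  proof
    show "?h ` (UNIV \<times> ({1..n} \<times> ?S)) \<subseteq> ?S'" by (auto simp: Pm_def)
    show "?S' \<subseteq> ?h ` (UNIV \<times> ({1..n} \<times> ?S))"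
    proof
      fix x assume "x \<in> ?S'"
      then obtain cs ks where x: "x = (cs, ks)" "length cs = Suc (Suc m)" "length ks = Suc (Suc m)"
        "set ks \<subseteq> {1..n}" "last cs = \<pi>'" "last ks = j" by (auto simp: Pm_def)
      then obtain c cs' k ks' where "cs = c # cs'" "ks = k # ks'" by (auto simp: length_Suc_conv)
      then show "x \<in> ?h ` (UNIV \<times> ({1..n} \<times> ?S))" using x
        by (auto simp: Pm_def intro!: image_eqI[of _ _ "(c, k, cs', ks')"])
    qed
  qed
  finally show ?case .
qed

lemma BAD: assumes "\<sigma> \<noteq> []" "\<not> (\<exists>\<tau>. \<tau> \<noteq> [] \<and> tgt = \<tau> @ \<pi>')" "tgt \<noteq> \<pi>'" "a \<in> {1..n}" "b \<in> {1..n}"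
  shows "M (\<sigma> @ \<pi>') tgt a b = 0"
proof -
  obtain q \<rho> where s: "\<sigma> = q # \<rho>" using assms(1) by (cases \<sigma>) auto
  have "\<nexists>\<tau>. tgt = \<tau> @ (\<rho> @ \<pi>')"
  proof
    assume "\<exists>\<tau>. tgt = \<tau> @ (\<rho> @ \<pi>')"
    then obtain \<tau> where t: "tgt = (\<tau> @ \<rho>) @ \<pi>'" by auto
    show False
    proof (cases "\<tau> @ \<rho> = []")
      case True then show False using t assms(3) by simp
    next
      case False then show False using t assms(2) by blast
    qed
  qed
  then show ?thesis using PD3[OF assms(4,5)] s by simp
qed

definition strip :: "'g list \<Rightarrow> 'g list \<Rightarrow> 'g list" where
  "strip \<pi>' x = take (length x - length \<pi>') x"

lemma strip_app[simp]: "strip \<pi>' (\<sigma> @ \<pi>') = \<sigma>" by (simp add: strip_def)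

lemma TR: assumes i: "i \<in> {1..n}"
  shows "gsum csS (\<lambda>(cs, ks). pwl (p # \<pi>') i cs ks) {(cs, ks) \<in> Pm (Suc m). last cs = \<pi>' \<and> \<pi>' \<notin> set (butlast cs) \<and> last ks = k}
       = gsum csS (\<lambda>(cs, ks). pwl [p] i cs ks) {(cs, ks) \<in> Pm (Suc m). last cs = [] \<and> last ks = k}"
proof -
  let ?L = "{(cs, ks) \<in> Pm (Suc m). last cs = \<pi>' \<and> \<pi>' \<notin> set (butlast cs) \<and> last ks = k}"
  let ?R = "{(cs, ks) \<in> Pm (Suc m). last cs = [] \<and> last ks = k}"
  let ?G = "{(cs, ks) \<in> Pm (Suc m). last cs = [] \<and> [] \<notin> set (butlast cs) \<and> last ks = k}"
  let ?h = "\<lambda>(cs, ks). (map (\<lambda>\<sigma>. \<sigma> @ \<pi>') cs, ks)"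
  have R: "gsum csS (\<lambda>(cs, ks). pwl [p] i cs ks) ?R = gsum csS (\<lambda>(cs, ks). pwl [p] i cs ks) ?G"
  proof (rule S.gsum_mono_zero[OF tgP])
    fix x assume "x \<in> ?R - ?G"
    then obtain cs ks where x: "x = (cs, ks)" "length cs = Suc m" "length ks = Suc m" "set ks \<subseteq> {1..n}"
      "[] \<in> set (butlast cs)" by (auto simp: Pm_def)
    then obtain t where t: "t < m" "cs ! t = []" by (auto simp: in_set_conv_nth nth_butlast)
    have "ks ! t \<in> set ks" "ks ! Suc t \<in> set ks" using x t by simp_all
    then have k1: "ks ! t \<in> {1..n}" "ks ! Suc t \<in> {1..n}" using x(4) by blast+
    have "pwl [p] i cs ks = 0"
      by (rule pwl_zero[of "Suc t"]) (use x t k1 PD1 in auto)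
    then show "(\<lambda>(cs, ks). pwl [p] i cs ks) x = 0" using x by simp
  qed auto
  have inj: "inj_on ?h ?G" by (auto simp: inj_on_def)
  have img: "?h ` ?G \<subseteq> ?L"
  proof
    fix y assume "y \<in> ?h ` ?G"
    then obtain cs ks where y: "y = ?h (cs, ks)" and g: "(cs, ks) \<in> ?G" by blast
    have ne: "cs \<noteq> []" using g by (auto simp: Pm_def)
    have "\<pi>' \<notin> set (butlast (map (\<lambda>\<sigma>. \<sigma> @ \<pi>') cs))"
      using g by (auto simp: Pm_def map_butlast[symmetric])
    then show "y \<in> ?L" using g y ne by (auto simp: Pm_def last_map)
  qed
  have val: "pwl (p # \<pi>') i (map (\<lambda>\<sigma>. \<sigma> @ \<pi>') cs) ks = pwl [p] i cs ks" if g: "(cs, ks) \<in> ?G" for cs ks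
    unfolding pwl_def
  proof (simp, intro arg_cong[where f = prod_list] map_cong refl)
    fix t assume t: "t \<in> set [0..<length cs]"
    have len: "length cs = Suc m" "length ks = Suc m" "set ks \<subseteq> {1..n}" "[] \<notin> set (butlast cs)" using g by (auto simp: Pm_def)
    have kt: "ks ! t \<in> {1..n}" using t len ks_in[of ks t] by auto
    have kt': "t > 0 \<Longrightarrow> ks ! (t - 1) \<in> {1..n}" using t len ks_in[of ks "t - 1"] by auto
    have src: "t > 0 \<Longrightarrow> cs ! (t - 1) \<noteq> []"
    proof -
      assume "t > 0"
      then have "cs ! (t - 1) \<in> set (butlast cs)" using t len by (auto simp: in_set_conv_nth nth_butlast intro!: exI[of _ "t - 1"])
      then show ?thesis using len by auto
    qed
    show "M (if t = 0 then p # \<pi>' else map (\<lambda>\<sigma>. \<sigma> @ \<pi>') cs ! (t - 1)) (map (\<lambda>\<sigma>. \<sigma> @ \<pi>') cs ! t)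
            (if t = 0 then i else ks ! (t - 1)) (ks ! t) =
          M (if t = 0 then [p] else cs ! (t - 1)) (cs ! t) (if t = 0 then i else ks ! (t - 1)) (ks ! t)"
    proof (cases "t = 0")
      case True then show ?thesis using PD2[of "[p]" i "ks ! t" \<pi>' "cs ! t"] i kt t by simp
    next
      case False then show ?thesis using PD2[of "cs ! (t - 1)" "ks ! (t - 1)" "ks ! t" \<pi>' "cs ! t"] src kt kt' t
        by simp
    qed
  qed
  have zero: "pwl (p # \<pi>') i cs ks = 0" if l: "(cs, ks) \<in> ?L - ?h ` ?G" for cs ks
  proof -
    have len: "length cs = Suc m" "length ks = Suc m" "set ks \<subseteq> {1..n}" "last cs = \<pi>'" "\<pi>' \<notin> set (butlast cs)" "last ks = k"
      using l by (auto simp: Pm_def)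
    let ?good = "\<lambda>x. \<exists>\<tau>. \<tau> \<noteq> [] \<and> x = \<tau> @ \<pi>'"
    have ex: "\<exists>t < m. \<not> ?good (cs ! t)"
    proof (rule ccontr)
      assume "\<not> (\<exists>t < m. \<not> ?good (cs ! t))"
      then have allg: "\<forall>t < m. ?good (cs ! t)" by blast
      let ?cs' = "map (strip \<pi>') cs"
      have rec: "map (\<lambda>\<sigma>. \<sigma> @ \<pi>') ?cs' = cs"
      proof (rule nth_equalityI)
        show "length (map (\<lambda>\<sigma>. \<sigma> @ \<pi>') ?cs') = length cs" by simp
        fix t assume "t < length (map (\<lambda>\<sigma>. \<sigma> @ \<pi>') ?cs')"
        then have t: "t < Suc m" using len by simp
        show "map (\<lambda>\<sigma>. \<sigma> @ \<pi>') ?cs' ! t = cs ! t"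
        proof (cases "t < m")
          case True then obtain \<tau> where "cs ! t = \<tau> @ \<pi>'" using allg by blast
          then show ?thesis using t len by simp
        next
          case False then have "t = m" using t by simp
          have "cs \<noteq> []" using len by auto
          then have "last cs = cs ! (length cs - 1)" by (rule last_conv_nth)
          then have "cs ! t = [] @ \<pi>'" using len \<open>t = m\<close> by simp
          then show ?thesis using t len by (simp del: append_Nil)
        qed
      qed
      have "(?cs', ks) \<in> ?G"
      proof -
        have "cs \<noteq> []" using len by auto
        then have "last ?cs' = []" using len by (simp add: last_map strip_def)
        moreover have "[] \<notin> set (butlast ?cs')"
        proof
          assume "[] \<in> set (butlast ?cs')"
          then obtain t where t: "t < m" "?cs' ! t = []" using len by (auto simp: in_set_conv_nth nth_butlast)
          obtain \<tau> where "\<tau> \<noteq> []" "cs ! t = \<tau> @ \<pi>'" using allg t by blast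
          then show False using t len by simp
        qed
        ultimately show ?thesis using len by (auto simp: Pm_def)
      qed
      then have "(cs, ks) \<in> ?h ` ?G" using rec by (auto intro!: image_eqI[of _ _ "(?cs', ks)"])
      then show False using l by blast
    qed
    obtain t0 where t0: "t0 < m" "\<not> ?good (cs ! t0)" "\<forall>t < t0. ?good (cs ! t)"
    proof -
      from ex obtain t where "t < m \<and> \<not> ?good (cs ! t)" by blast
      from exists_least_iff[THEN iffD1, OF exI[of "\<lambda>t. t < m \<and> \<not> ?good (cs ! t)", OF this]]
      obtain t0 where "t0 < m \<and> \<not> ?good (cs ! t0)" "\<forall>t < t0. \<not> (t < m \<and> \<not> ?good (cs ! t))" by blast
      then show ?thesis using that by auto
    qed
    have ne: "cs ! t0 \<noteq> \<pi>'"
    proof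
      assume "cs ! t0 = \<pi>'"
      moreover have "cs ! t0 \<in> set (butlast cs)" using t0 len by (auto simp: in_set_conv_nth nth_butlast intro!: exI[of _ t0])
      ultimately show False using len by simp
    qed
    have kt: "ks ! t0 \<in> {1..n}" using t0 len ks_in[of ks t0] by simp
    have kt': "t0 > 0 \<Longrightarrow> ks ! (t0 - 1) \<in> {1..n}" using t0 len ks_in[of ks "t0 - 1"] by simp
    show ?thesis
    proof (rule pwl_zero[of t0])
      show "t0 < length cs" using t0 len by simp
      show "M (if t0 = 0 then p # \<pi>' else cs ! (t0 - 1)) (cs ! t0) (if t0 = 0 then i else ks ! (t0 - 1)) (ks ! t0) = 0"
      proof (cases "t0 = 0")
        case True then show ?thesis using BAD[of "[p]" "cs ! t0" \<pi>' i "ks ! t0"] t0 ne i kt by simp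
      next
        case False
        then obtain \<tau> where "\<tau> \<noteq> []" "cs ! (t0 - 1) = \<tau> @ \<pi>'" using t0(3) by (metis diff_less less_one neq0_conv)
        then show ?thesis using BAD[of \<tau> "cs ! t0" \<pi>' "ks ! (t0 - 1)" "ks ! t0"] t0 ne kt kt' False by simp
      qed
    qed
  qed
  have "gsum csS (\<lambda>(cs, ks). pwl (p # \<pi>') i cs ks) ?L = gsum csS (\<lambda>(cs, ks). pwl (p # \<pi>') i cs ks) (?h ` ?G)"
    by (rule S.gsum_mono_zero[OF tgP img]) (use zero in auto)
  also have "\<dots> = gsum csS (\<lambda>x. (\<lambda>(cs, ks). pwl (p # \<pi>') i cs ks) (?h x)) ?G"
    by (rule S.gsum_reindex[OF tgP tgP inj])
  also have "\<dots> = gsum csS (\<lambda>(cs, ks). pwl [p] i cs ks) ?G"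
    by (rule S.gsum_cong[OF tgP]) (auto simp: val)
  finally show ?thesis using R by simp
qed

end


context pda begin

lemma Om_nil: assumes k: "k \<in> {1..n}" shows "Om l [] k = 0"
  unfolding Om_prod
proof (rule V.gsum_zero[OF _ tgU])
  fix x :: "(nat \<Rightarrow> 'g list) \<times> (nat \<Rightarrow> nat)" assume "x \<in> UNIV \<times> Pl n l"
  then obtain ps js where x: "x = (ps, js)" "js \<in> Pl n l" by auto
  have "js 0 \<in> {1..n}" using x by (auto simp: Pl_def)
  then have "W [] k ps js 0 = 0" using PD1[OF k] by (simp add: W_def)
  then show "(\<lambda>(ps, js). ip (W [] k ps js)) x = 0" using x ip_zero by simp
qed

lemma Uinf: assumes i: "i \<in> {1..n}"
  shows "gsum csV (\<lambda>(ps, js). ip (W (p # \<pi>') i ps js)) {(ps, js) \<in> UNIV \<times> Pl n l. \<forall>t. ps t \<noteq> \<pi>'} = Om l [p] i"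
proof -
  let ?U = "UNIV \<times> Pl n l"
  let ?Ui = "{(ps, js) \<in> UNIV \<times> Pl n l. \<forall>t. ps t \<noteq> \<pi>'}"
  let ?G = "{(ps, js) \<in> UNIV \<times> Pl n l. \<forall>t. ps t \<noteq> []}"
  let ?h = "\<lambda>(ps, js). ((\<lambda>t. ps t @ \<pi>'), js)"
  let ?good = "\<lambda>x. \<exists>\<tau>. \<tau> \<noteq> [] \<and> x = \<tau> @ \<pi>'"
  have jsR: "js t \<in> {1..n}" if "js \<in> Pl n l" for js t using that by (auto simp: Pl_def)
  have R: "Om l [p] i = gsum csV (\<lambda>(ps, js). ip (W [p] i ps js)) ?G"
    unfolding Om_prod
  proof (rule V.gsum_mono_zero[OF tgU])
    fix x :: "(nat \<Rightarrow> 'g list) \<times> (nat \<Rightarrow> nat)" assume "x \<in> ?U - ?G"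
    then obtain ps js t where x: "x = (ps, js)" "js \<in> Pl n l" "ps t = []" by auto
    have "W [p] i ps js (Suc t) = 0" using x PD1[OF jsR[OF x(2)] jsR[OF x(2)]] by (simp add: W_def)
    then show "(\<lambda>(ps, js). ip (W [p] i ps js)) x = 0" using x ip_zero by simp
  qed auto
  have inj: "inj_on ?h ?G" by (auto simp: inj_on_def fun_eq_iff)
  have img: "?h ` ?G \<subseteq> ?Ui" by auto
  have val: "W (p # \<pi>') i (\<lambda>t. ps t @ \<pi>') js = W [p] i ps js" if g: "(ps, js) \<in> ?G" for ps js
  proof
    fix t
    have j: "js t \<in> {1..n}" "js (t - 1) \<in> {1..n}" using g jsR by auto
    show "W (p # \<pi>') i (\<lambda>t. ps t @ \<pi>') js t = W [p] i ps js t"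
    proof (cases "t = 0")
      case True then show ?thesis using PD2[of "[p]" i "js t" \<pi>' "ps t"] i j by (simp add: W_def)
    next
      case False then show ?thesis using PD2[of "ps (t - 1)" "js (t - 1)" "js t" \<pi>' "ps t"] j g
        by (simp add: W_def)
    qed
  qed
  have zero: "ip (W (p # \<pi>') i ps js) = 0" if u: "(ps, js) \<in> ?Ui - ?h ` ?G" for ps js
  proof -
    have u1: "js \<in> Pl n l" "\<forall>t. ps t \<noteq> \<pi>'" using u by auto
    have ex: "\<exists>t. \<not> ?good (ps t)"
    proof (rule ccontr)
      assume "\<not> (\<exists>t. \<not> ?good (ps t))"
      then have allg: "\<forall>t. ?good (ps t)" by blast
      let ?ps' = "\<lambda>t. strip \<pi>' (ps t)"
      have rec: "(\<lambda>t. ?ps' t @ \<pi>') = ps"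
      proof
        fix t obtain \<tau> where "ps t = \<tau> @ \<pi>'" using allg by blast
        then show "?ps' t @ \<pi>' = ps t" by simp
      qed
      have "(?ps', js) \<in> ?G"
      proof -
        have "\<forall>t. ?ps' t \<noteq> []"
        proof
          fix t obtain \<tau> where "\<tau> \<noteq> []" "ps t = \<tau> @ \<pi>'" using allg by blast
          then show "?ps' t \<noteq> []" by simp
        qed
        then show ?thesis using u1 by auto
      qed
      then have "(ps, js) \<in> ?h ` ?G" using rec by (auto intro!: image_eqI[of _ _ "(?ps', js)"])
      then show False using u by blast
    qed
    obtain t0 where t0: "\<not> ?good (ps t0)" "\<forall>t < t0. ?good (ps t)"
    proof -
      from ex obtain t where "\<not> ?good (ps t)" by blast
      from exists_least_iff[THEN iffD1, OF exI[of "\<lambda>t. \<not> ?good (ps t)", OF this]]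
      obtain t0 where "\<not> ?good (ps t0)" "\<forall>t < t0. \<not> \<not> ?good (ps t)" by blast
      then show ?thesis using that by auto
    qed
    have j: "js t0 \<in> {1..n}" "js (t0 - 1) \<in> {1..n}" using u1 jsR by auto
    have "W (p # \<pi>') i ps js t0 = 0"
    proof (cases "t0 = 0")
      case True then show ?thesis using BAD[of "[p]" "ps t0" \<pi>' i "js t0"] t0 u1 i j by (simp add: W_def)
    next
      case False
      then obtain \<tau> where "\<tau> \<noteq> []" "ps (t0 - 1) = \<tau> @ \<pi>'" using t0(2) by (metis diff_less less_one neq0_conv)
      then show ?thesis using BAD[of \<tau> "ps t0" \<pi>' "js (t0 - 1)" "js t0"] t0 u1 j False by (simp add: W_def)
    qed
    then show ?thesis by (rule ip_zero)
  qed
  have "gsum csV (\<lambda>(ps, js). ip (W (p # \<pi>') i ps js)) ?Ui = gsum csV (\<lambda>(ps, js). ip (W (p # \<pi>') i ps js)) (?h ` ?G)"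
    by (rule V.gsum_mono_zero[OF tgU img]) (use zero in auto)
  also have "\<dots> = gsum csV (\<lambda>x. (\<lambda>(ps, js). ip (W (p # \<pi>') i ps js)) (?h x)) ?G"
    by (rule V.gsum_reindex[OF tgU tgU inj])
  also have "\<dots> = gsum csV (\<lambda>(ps, js). ip (W [p] i ps js)) ?G"
    by (rule V.gsum_cong[OF tgU]) (auto simp: val)
  finally show ?thesis using R by simp
qed

lemma mstar_Suc: "mstar csS n M [p] [] i k = gsum csS (\<lambda>T. mp (Suc T) [p] [] i k) UNIV"
proof -
  have "mstar csS n M [p] [] i k = gsum csS (\<lambda>m. mp m [p] [] i k) (range Suc)"
    unfolding mstar_def
  proof (rule S.gsum_mono_zero[OF tg_nat])
    fix m assume "m \<in> UNIV - range Suc"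
    then have "m = 0" by (cases m) auto
    then show "mp m [p] [] i k = 0" by simp
  qed auto
  also have "\<dots> = gsum csS (\<lambda>m. mp (Suc m) [p] [] i k) UNIV"
    by (rule S.gsum_reindex[OF tg_nat tg_nat]) simp
  finally show ?thesis .
qed

lemma UT: assumes i: "i \<in> {1..n}"
  shows "gsum csV (\<lambda>(ps, js). ip (W (p # \<pi>') i ps js))
           {(ps, js) \<in> UNIV \<times> Pl n l. (map ps [0..<Suc T], map js [0..<Suc T]) \<in> {(cs, ks). last cs = \<pi>' \<and> \<pi>' \<notin> set (butlast cs)}}
       = (\<Sum>k=1..n. sm (mp (Suc T) [p] [] i k) (Om l \<pi>' k))"
proof -
  let ?Q = "{(cs, ks). last cs = \<pi>' \<and> \<pi>' \<notin> set (butlast cs)}"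
  let ?B = "\<lambda>k. {(cs, ks) \<in> Pm (Suc T). last cs = \<pi>' \<and> \<pi>' \<notin> set (butlast cs) \<and> last ks = k}"
  have "gsum csV (\<lambda>(ps, js). ip (W (p # \<pi>') i ps js)) {(ps, js) \<in> UNIV \<times> Pl n l. (map ps [0..<Suc T], map js [0..<Suc T]) \<in> ?Q}
      = gsum csV (\<lambda>(cs, ks). sm (pwl (p # \<pi>') i cs ks) (Om l (lst (p # \<pi>') cs) (lst i ks))) (Pm (Suc T) \<inter> ?Q)"
    by (rule SPLIT)
  also have "\<dots> = gsum csV (\<lambda>(cs, ks). sm (pwl (p # \<pi>') i cs ks) (Om l \<pi>' (last ks))) (Pm (Suc T) \<inter> ?Q)"
    by (rule V.gsum_cong[OF tgP]) (auto simp: lst_def Pm_def)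
  also have "Pm (Suc T) \<inter> ?Q = (\<Union>k\<in>{1..n}. ?B k)"
  proof
    show "Pm (Suc T) \<inter> ?Q \<subseteq> (\<Union>k\<in>{1..n}. ?B k)"
    proof
      fix x assume x: "x \<in> Pm (Suc T) \<inter> ?Q"
      then obtain cs ks where c: "x = (cs, ks)" "length ks = Suc T" "set ks \<subseteq> {1..n}" by (auto simp: Pm_def)
      then have "ks \<noteq> []" by auto
      then have "last ks \<in> set ks" by (rule last_in_set)
      then have "last ks \<in> {1..n}" using c by blast
      then show "x \<in> (\<Union>k\<in>{1..n}. ?B k)" using x c by auto
    qed
  qed auto
  also have "gsum csV (\<lambda>(cs, ks). sm (pwl (p # \<pi>') i cs ks) (Om l \<pi>' (last ks))) (\<Union>k\<in>{1..n}. ?B k)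
     = gsum csV (\<lambda>k. gsum csV (\<lambda>(cs, ks). sm (pwl (p # \<pi>') i cs ks) (Om l \<pi>' (last ks))) (?B k)) {1..n}"
    by (rule V.gsum_part[OF tgP tg_nat]) auto
  also have "\<dots> = (\<Sum>k=1..n. gsum csV (\<lambda>(cs, ks). sm (pwl (p # \<pi>') i cs ks) (Om l \<pi>' k)) (?B k))"
    by (simp add: V.gsum_finite[OF tg_nat]) (intro sum.cong refl V.gsum_cong[OF tgP], auto)
  also have "\<dots> = (\<Sum>k=1..n. sm (mp (Suc T) [p] [] i k) (Om l \<pi>' k))"
  proof (rule sum.cong[OF refl])
    fix k assume k: "k \<in> {1..n}"
    have "gsum csV (\<lambda>(cs, ks). sm (pwl (p # \<pi>') i cs ks) (Om l \<pi>' k)) (?B k)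
        = sm (gsum csS (\<lambda>(cs, ks). pwl (p # \<pi>') i cs ks) (?B k)) (Om l \<pi>' k)"
      by (simp add: gsum_sm split_def)
    also have "gsum csS (\<lambda>(cs, ks). pwl (p # \<pi>') i cs ks) (?B k) = mp (Suc T) [p] [] i k"
      unfolding TR[OF i] PATH[OF i k] by (rule refl)
    finally show "gsum csV (\<lambda>(cs, ks). sm (pwl (p # \<pi>') i cs ks) (Om l \<pi>' k)) (?B k) = sm (mp (Suc T) [p] [] i k) (Om l \<pi>' k)" .
  qed
  finally show ?thesis .
qed

lemma Z3: assumes i: "i \<in> {1..n}"
  shows "Om l (p # \<pi>') i = Om l [p] i + (\<Sum>k=1..n. sm (mstar csS n M [p] [] i k) (Om l \<pi>' k))"
proof -
  let ?w = "\<lambda>(ps, js). ip (W (p # \<pi>') i ps js)"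
  let ?U = "UNIV \<times> Pl n l"
  let ?Ui = "{(ps, js) \<in> UNIV \<times> Pl n l. \<forall>t. ps t \<noteq> \<pi>'}"
  let ?Q = "{(cs, ks). last cs = \<pi>' \<and> \<pi>' \<notin> set (butlast cs)}"
  let ?UT = "\<lambda>T. {(ps, js) \<in> UNIV \<times> Pl n l. (map ps [0..<Suc T], map js [0..<Suc T]) \<in> ?Q}"
  have memUT: "(x :: (nat \<Rightarrow> 'g list) \<times> (nat \<Rightarrow> nat)) \<in> ?UT T \<longleftrightarrow> x \<in> ?U \<and> fst x T = \<pi>' \<and> (\<forall>t<T. fst x t \<noteq> \<pi>')" for x T
  proof -
    obtain ps js where x: "x = (ps, js)" by (cases x)
    have b: "butlast (map ps [0..<Suc T]) = map ps [0..<T]" by (simp add: map_butlast[symmetric])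
    have c: "\<pi>' \<notin> set (map ps [0..<T]) \<longleftrightarrow> (\<forall>t<T. ps t \<noteq> \<pi>')" by auto
    show ?thesis using b c by (simp add: x)
  qed
  have split: "?U = ?Ui \<union> (\<Union>T. ?UT T)"
  proof
    show "?U \<subseteq> ?Ui \<union> (\<Union>T. ?UT T)"
    proof
      fix x :: "(nat \<Rightarrow> 'g list) \<times> (nat \<Rightarrow> nat)" assume x: "x \<in> ?U"
      show "x \<in> ?Ui \<union> (\<Union>T. ?UT T)"
      proof (cases "\<exists>t. fst x t = \<pi>'")
        case False then show ?thesis using x by (cases x) auto
      next
        case True
        from exists_least_iff[THEN iffD1, OF True]
        obtain T where "fst x T = \<pi>'" "\<forall>t<T. fst x t \<noteq> \<pi>'" by blast
        then have "x \<in> ?UT T" using x memUT by blast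
        then show ?thesis by blast
      qed
    qed
  next
    show "?Ui \<union> (\<Union>T. ?UT T) \<subseteq> ?U" by auto
  qed
  have d1: "?Ui \<inter> (\<Union>T. ?UT T) = {}" using memUT by fastforce
  have d2: "?UT T \<inter> ?UT T' = {}" if "T \<noteq> T'" for T T'
  proof -
    { fix x assume "x \<in> ?UT T" "x \<in> ?UT T'"
      then have a: "fst x T = \<pi>'" "\<forall>t<T. fst x t \<noteq> \<pi>'" "fst x T' = \<pi>'" "\<forall>t<T'. fst x t \<noteq> \<pi>'"
        using memUT by blast+
      have False using that a by (metis linorder_neqE_nat) }
    then show ?thesis by blast
  qed
  have "Om l (p # \<pi>') i = gsum csV ?w (?Ui \<union> (\<Union>T. ?UT T))"
    by (subst split[symmetric]) (rule Om_prod)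
  also have "\<dots> = gsum csV ?w ?Ui + gsum csV ?w (\<Union>T. ?UT T)" by (rule V.gsum_union[OF tgU d1])
  also have "gsum csV ?w ?Ui = Om l [p] i" by (rule Uinf[OF i])
  also have "gsum csV ?w (\<Union>T. ?UT T) = gsum csV (\<lambda>T. gsum csV ?w (?UT T)) UNIV"
    by (rule V.gsum_part[OF tgU tg_nat]) (use d2 in auto)
  also have "\<dots> = gsum csV (\<lambda>T. \<Sum>k=1..n. sm (mp (Suc T) [p] [] i k) (Om l \<pi>' k)) UNIV"
    by (rule V.gsum_cong[OF tg_nat]) (rule UT[OF i])
  also have "\<dots> = (\<Sum>k=1..n. gsum csV (\<lambda>T. sm (mp (Suc T) [p] [] i k) (Om l \<pi>' k)) UNIV)"
    by (simp add: V.gsum_sum[OF tg_nat])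
  also have "\<dots> = (\<Sum>k=1..n. sm (mstar csS n M [p] [] i k) (Om l \<pi>' k))"
    by (simp add: mstar_Suc gsum_sm)
  finally show ?thesis .
qed

end


context pda begin

lemma mv_mm: "mv sm n (mm n A B) v k = (\<Sum>k'=1..n. sm (A k k') (mv sm n B v k'))"
proof -
  have "mv sm n (mm n A B) v k = (\<Sum>k''=1..n. \<Sum>k'=1..n. sm (A k k') (sm (B k' k'') (v k'')))"
    by (simp add: mv_def mm_def sum_sm sm_mult)
  also have "\<dots> = (\<Sum>k'=1..n. \<Sum>k''=1..n. sm (A k k') (sm (B k' k'') (v k'')))" by (rule sum.swap)
  also have "\<dots> = (\<Sum>k'=1..n. sm (A k k') (mv sm n B v k'))" by (simp add: mv_def sm_sum)
  finally show ?thesis .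
qed

lemma mv_idm: "k \<in> {1..n} \<Longrightarrow> mv sm n idm v k = v k"
proof -
  assume k: "k \<in> {1..n}"
  have "mv sm n idm v k = (\<Sum>k'=1..n. if k = k' then v k' else 0)"
    unfolding mv_def idm_def by (rule sum.cong) auto
  then show ?thesis using k by (simp add: sum.delta)
qed

lemma Om_word: "k \<in> {1..n} \<Longrightarrow> Om l \<pi> k = (\<Sum>j<length \<pi>. mv sm n (word_mat n (\<lambda>p. mstar csS n M [p] []) (take j \<pi>)) (momega csV ip n l M [\<pi> ! j]) k)"
proof (induction \<pi> arbitrary: k)
  case Nil then show ?case by (simp add: Om_nil)
next
  case (Cons q \<pi>)
  let ?x = "\<lambda>p. mstar csS n M [p] []"
  have "Om l (q # \<pi>) k = Om l [q] k + (\<Sum>k'=1..n. sm (?x q k k') (Om l \<pi> k'))"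
    by (rule Z3[OF Cons.prems])
  also have "\<dots> = Om l [q] k + (\<Sum>k'=1..n. sm (?x q k k') (\<Sum>j<length \<pi>. mv sm n (word_mat n ?x (take j \<pi>)) (momega csV ip n l M [\<pi> ! j]) k'))"
    using Cons.IH by simp
  also have "\<dots> = Om l [q] k + (\<Sum>j<length \<pi>. \<Sum>k'=1..n. sm (?x q k k') (mv sm n (word_mat n ?x (take j \<pi>)) (momega csV ip n l M [\<pi> ! j]) k'))"
    by (simp only: sm_sum) (simp only: sum.swap[of _ "{1..n}" "{..<length \<pi>}"])
  also have "\<dots> = (\<Sum>j<length (q # \<pi>). mv sm n (word_mat n ?x (take j (q # \<pi>))) (momega csV ip n l M [(q # \<pi>) ! j]) k)"
    by (simp add: sum.lessThan_Suc_shift mv_idm[OF Cons.prems] word_mat_def mv_mm del: sum.lessThan_Suc)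
  finally show ?case .
qed

lemma conj2: assumes i: "i \<in> {1..n}"
  shows "momega csV ip n l M [p] i = gsum csV (\<lambda>\<pi>. mv sm n (M [p] \<pi>)
          (\<lambda>i'. \<Sum>j<length \<pi>. mv sm n (word_mat n (\<lambda>p. mstar csS n M [p] []) (take j \<pi>)) (momega csV ip n l M [\<pi> ! j]) i') i)
          {\<pi>. \<pi> \<noteq> []}"
proof -
  have "Om l [p] i = gsum csV (\<lambda>c. \<Sum>k=1..n. sm (M [p] c i k) (Om l c k)) UNIV" by (rule Z1)
  also have "\<dots> = gsum csV (\<lambda>c. \<Sum>k=1..n. sm (M [p] c i k) (Om l c k)) {\<pi>. \<pi> \<noteq> []}"
  proof (rule V.gsum_mono_zero[OF tgL])
    fix c :: "'g list" assume "c \<in> UNIV - {\<pi>. \<pi> \<noteq> []}"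
    then have "c = []" by simp
    then show "(\<Sum>k=1..n. sm (M [p] c i k) (Om l c k)) = 0" by (simp add: Om_nil)
  qed auto
  also have "\<dots> = gsum csV (\<lambda>\<pi>. mv sm n (M [p] \<pi>)
          (\<lambda>i'. \<Sum>j<length \<pi>. mv sm n (word_mat n (\<lambda>p. mstar csS n M [p] []) (take j \<pi>)) (momega csV ip n l M [\<pi> ! j]) i') i)
          {\<pi>. \<pi> \<noteq> []}"
    unfolding mv_def by (intro V.gsum_cong[OF tgL] sum.cong refl) (simp add: Om_word[unfolded mv_def])
  finally show ?thesis .
qed

end

theorem theorem11:
  fixes csS :: "(tag \<Rightarrow> 's::semiring_1) \<Rightarrow> tag set \<Rightarrow> 's"
    and csV :: "(tag \<Rightarrow> 'v::comm_monoid_add) \<Rightarrow> tag set \<Rightarrow> 'v"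
    and sm :: "'s \<Rightarrow> 'v \<Rightarrow> 'v"
    and ip :: "(nat \<Rightarrow> 's) \<Rightarrow> 'v"
    and S' :: "'s set"
    and n l :: nat
    and I P :: "nat \<Rightarrow> 's"
    and M :: "'g::finite list \<Rightarrow> 'g list \<Rightarrow> nat \<Rightarrow> nat \<Rightarrow> 's"
    and p0 :: 'g
  assumes "complete_ss_pair csS csV sm ip"
    and "0 \<in> S'" and "1 \<in> S'"
    and "omega_pda S' n I M P l"
  defines "x \<equiv> \<lambda>p. mstar csS n M [p] []"
    and "z \<equiv> \<lambda>p. momega csV ip n l M [p]"
  shows "(\<forall>p. \<forall>i\<in>{1..n}. \<forall>j\<in>{1..n}.
            x p i j = gsum csS (\<lambda>\<pi>. mm n (M [p] \<pi>) (word_mat n x \<pi>) i j) UNIV)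
       \<and> (\<forall>p. \<forall>i\<in>{1..n}.
            z p i = gsum csV (\<lambda>\<pi>. mv sm n (M [p] \<pi>)
                      (\<lambda>i'. \<Sum>j<length \<pi>. mv sm n (word_mat n x (take j \<pi>)) (z (\<pi> ! j)) i') i)
                    {\<pi>. \<pi> \<noteq> []})
       \<and> behavior csS csV sm ip n I M P p0 l
           = ((\<Sum>i = 1..n. \<Sum>j = 1..n. I i * x p0 i j * P j), (\<Sum>i = 1..n. sm (I i) (z p0 i)))"
proof -
  have pmx: "pushdown_matrix n M" using assms(4) unfolding omega_pda_def by (elim conjE) assumption
  interpret PD: pda csS csV sm ip n M
    by (rule pda.intro[OF cssp.intro[OF assms(1)] pda_axioms.intro[OF pmx]])
  have c1: "\<forall>p. \<forall>i\<in>{1..n}. \<forall>j\<in>{1..n}. x p i j = gsum csS (\<lambda>\<pi>. mm n (M [p] \<pi>) (word_mat n x \<pi>) i j) UNIV"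
    unfolding x_def using PD.conj1 by blast
  have c2: "\<forall>p. \<forall>i\<in>{1..n}. z p i = gsum csV (\<lambda>\<pi>. mv sm n (M [p] \<pi>)
                      (\<lambda>i'. \<Sum>j<length \<pi>. mv sm n (word_mat n x (take j \<pi>)) (z (\<pi> ! j)) i') i) {\<pi>. \<pi> \<noteq> []}"
    unfolding x_def z_def using PD.conj2 by blast
  have c3: "behavior csS csV sm ip n I M P p0 l
           = ((\<Sum>i = 1..n. \<Sum>j = 1..n. I i * x p0 i j * P j), (\<Sum>i = 1..n. sm (I i) (z p0 i)))"
    by (simp add: behavior_def x_def z_def)
  show ?thesis using c1 c2 c3 by blast
qed


end
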